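(* For $p\in[1,\infty)$ and $\zeta\in\mathcal{M}^{n-1}_p$ the functional $\delta_{\zeta,p}(u,v)=\left(\int_{\mathbb{R}^n}|\zeta(u(x))-\zeta(v(x))|^p\,dx\right)^{1/p}$ defines a metric on $\operatorname{Conv}_{\text{coe}}^{(n)}(\mathbb{R}^n)$. Furthermore, for every $u_k,u\in\operatorname{Conv}_{\text{coe}}^{(n)}(\mathbb{R}^n)$ we have $\delta_{\zeta,p}(u_k,u)\to 0$ if and only if $u_k$ epi-converges to $u$ as $k\to\infty$.
   Context: $\operatorname{Conv}_{\text{coe}}^{(n)}(\mathbb{R}^n)$ denotes the space of proper, lower semicontinuous, coercive, convex functions $u:\mathbb{R}^n\to\mathbb{R}\cup\{+\infty\}$ whose domain $\operatorname{dom}u=\{x: u(x)<+\infty\}$ has dimension $n$ (equivalently $0<\int e^{-u}<\infty$). For $p\in[1,\infty)$, $\mathcal{M}^{n-1}_p$ is the set of continuous, strictly decreasing functions $\zeta:\mathbb{R}\to(0,\infty)$ such that $\int_0^\infty \zeta(t)^p t^{n-1}\,dt<+\infty$; one sets $\zeta(+\infty)=0$. A sequence $u_k$ epi-converges to $u$ if for every $x$: $\liminf u_k(x_k)\ge u(x)$ for every sequence $x_k\to x$, and $\limsup u_k(x_k)\le u(x)$ for some sequence $x_k\to x$. *)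

theory Defs
  imports "HOL-Analysis.Analysis"
begin

text \<open>Extended-valued functions u : R^n -> R \<union> {+\<infinity>} are modelled as functions
  into ereal that never take the value -\<infinity>.\<close>

definition dom_fun :: "('a \<Rightarrow> ereal) \<Rightarrow> 'a set" where
  "dom_fun u = {x. u x < \<infinity>}"

definition proper_fun :: "('a \<Rightarrow> ereal) \<Rightarrow> bool" where
  "proper_fun u \<longleftrightarrow> (\<forall>x. u x \<noteq> -\<infinity>) \<and> (\<exists>x. u x < \<infinity>)"

definition lsc_fun :: "('a::topological_space \<Rightarrow> ereal) \<Rightarrow> bool" where
  "lsc_fun u \<longleftrightarrow> (\<forall>x X. X \<longlonglongrightarrow> x \<longrightarrow> u x \<le> liminf (\<lambda>k. u (X k)))"

definition convex_fun :: "('a::real_vector \<Rightarrow> ereal) \<Rightarrow> bool" where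
  "convex_fun u \<longleftrightarrow> (\<forall>x y (t::real). 0 \<le> t \<and> t \<le> 1 \<longrightarrow>
      u ((1 - t) *\<^sub>R x + t *\<^sub>R y) \<le> ereal (1 - t) * u x + ereal t * u y)"

definition coercive_fun :: "('a::real_normed_vector \<Rightarrow> ereal) \<Rightarrow> bool" where
  "coercive_fun u \<longleftrightarrow> (u \<longlongrightarrow> \<infinity>) at_infinity"

definition Conv_coe :: "('a::euclidean_space \<Rightarrow> ereal) set" where
  "Conv_coe = {u. proper_fun u \<and> lsc_fun u \<and> coercive_fun u \<and> convex_fun u
                  \<and> aff_dim (dom_fun u) = int DIM('a)}"

definition M_class :: "nat \<Rightarrow> real \<Rightarrow> (real \<Rightarrow> real) set" where
  "M_class n p = {\<zeta>. continuous_on UNIV \<zeta> \<and> (\<forall>s t. s < t \<longrightarrow> \<zeta> t < \<zeta> s) \<and> (\<forall>t. 0 < \<zeta> t)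
      \<and> (\<integral>\<^sup>+ t. indicator {0..} t * ennreal (\<zeta> t powr p * t ^ (n - 1)) \<partial>lborel) < \<infinity>}"

definition zeta_ext :: "(real \<Rightarrow> real) \<Rightarrow> ereal \<Rightarrow> real" where
  "zeta_ext \<zeta> t = (if t = \<infinity> then 0 else \<zeta> (real_of_ereal t))"

definition delta_zp :: "(real \<Rightarrow> real) \<Rightarrow> real \<Rightarrow> ('a::euclidean_space \<Rightarrow> ereal) \<Rightarrow> ('a \<Rightarrow> ereal) \<Rightarrow> real" where
  "delta_zp \<zeta> p u v =
     (integral\<^sup>L lebesgue (\<lambda>x. \<bar>zeta_ext \<zeta> (u x) - zeta_ext \<zeta> (v x)\<bar> powr p)) powr (1 / p)"

definition epi_converges :: "(nat \<Rightarrow> 'a::topological_space \<Rightarrow> ereal) \<Rightarrow> ('a \<Rightarrow> ereal) \<Rightarrow> bool" where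
  "epi_converges uk u \<longleftrightarrow> (\<forall>x.
      (\<forall>X. X \<longlonglongrightarrow> x \<longrightarrow> u x \<le> liminf (\<lambda>k. uk k (X k))) \<and>
      (\<exists>X. X \<longlonglongrightarrow> x \<and> limsup (\<lambda>k. uk k (X k)) \<le> u x))"

end

theory Submission
  imports Defs
begin

lemma M_classD:
  assumes "\<zeta> \<in> M_class n p"
  shows "continuous_on UNIV \<zeta>" "\<And>s t. s < t \<Longrightarrow> \<zeta> t < \<zeta> s" "\<And>t. 0 < \<zeta> t"
    "(\<integral>\<^sup>+ t. indicator {0..} t * ennreal (\<zeta> t powr p * t ^ (n - 1)) \<partial>lborel) < \<infinity>"
  using assms unfolding M_class_def by auto

lemma zeta_le:
  assumes "\<zeta> \<in> M_class n p" "s \<le> t" shows "\<zeta> t \<le> \<zeta> s"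
  using M_classD(2)[OF assms(1), of s t] assms(2) by (cases "s = t") auto

lemma ze_nonneg: assumes "\<zeta> \<in> M_class n p" shows "0 \<le> zeta_ext \<zeta> w"
  using M_classD(3)[OF assms] unfolding zeta_ext_def by (auto intro: less_imp_le)

lemma ze_pos: assumes "\<zeta> \<in> M_class n p" "w \<noteq> \<infinity>" shows "0 < zeta_ext \<zeta> w"
  using M_classD(3)[OF assms(1)] assms(2) unfolding zeta_ext_def by auto

lemma ze_ge:
  assumes "\<zeta> \<in> M_class n p" "w \<noteq> -\<infinity>" "w \<le> ereal a" shows "\<zeta> a \<le> zeta_ext \<zeta> w"
proof -
  obtain r where r: "w = ereal r" using assms(2,3) by (cases w) auto
  then show ?thesis using assms zeta_le[OF assms(1), of r a] unfolding zeta_ext_def by auto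
qed

lemma ze_le:
  assumes "\<zeta> \<in> M_class n p" "ereal b \<le> w" shows "zeta_ext \<zeta> w \<le> \<zeta> b"
proof (cases w)
  case (real r)
  then show ?thesis using assms zeta_le[OF assms(1), of b r] unfolding zeta_ext_def by auto
next
  case PInf
  then show ?thesis using M_classD(3)[OF assms(1), of b] unfolding zeta_ext_def by auto
next
  case MInf
  then show ?thesis using assms by auto
qed

lemma ze_anti:
  assumes "\<zeta> \<in> M_class n p" "w \<noteq> -\<infinity>" "w \<le> w'" shows "zeta_ext \<zeta> w' \<le> zeta_ext \<zeta> w"
proof (cases w')
  case (real r)
  then show ?thesis using ze_ge[OF assms(1,2), of r] assms by (simp add: zeta_ext_def)
next
  case PInf
  then show ?thesis using ze_nonneg[OF assms(1)] by (simp add: zeta_ext_def)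
next
  case MInf
  then show ?thesis using assms by auto
qed

lemma zeta_small:
  assumes "\<zeta> \<in> M_class n p" "e > 0" "0 \<le> p"
  shows "\<exists>T. \<zeta> T < e"
proof (rule ccontr)
  assume "\<not> ?thesis"
  then have ge: "\<And>T. e \<le> \<zeta> T" by (auto simp: not_less)
  have "ennreal (e powr p) * ennreal (real N) \<le> (\<integral>\<^sup>+ t. indicator {0..} t * ennreal (\<zeta> t powr p * t ^ (n - 1)) \<partial>lborel)" for N :: nat
  proof -
    have "ennreal (e powr p) * ennreal (real N) = (\<integral>\<^sup>+ t. ennreal (e powr p) * indicator {1..1 + real N} t \<partial>lborel)"
      by (simp add: nn_integral_cmult)
    also have "\<dots> \<le> (\<integral>\<^sup>+ t. indicator {0..} t * ennreal (\<zeta> t powr p * t ^ (n - 1)) \<partial>lborel)"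
    proof (intro nn_integral_mono)
      fix t :: real
      show "ennreal (e powr p) * indicator {1..1 + real N} t \<le> indicator {0..} t * ennreal (\<zeta> t powr p * t ^ (n - 1))"
      proof (cases "t \<in> {1..1 + real N}")
        case True
        then have t1: "1 \<le> t" by auto
        have "e powr p \<le> \<zeta> t powr p" using ge[of t] assms(2,3) by (intro powr_mono2) auto
        also have "\<dots> \<le> \<zeta> t powr p * t ^ (n - 1)"
          using t1 by (intro mult_le_cancel_left1[THEN iffD2] conjI) (auto simp: one_le_power)
        finally show ?thesis using True by (auto simp: indicator_def intro!: ennreal_leI)
      qed auto
    qed
    finally show ?thesis .
  qed
  moreover obtain r where r: "(\<integral>\<^sup>+ t. indicator {0..} t * ennreal (\<zeta> t powr p * t ^ (n - 1)) \<partial>lborel) = ennreal r" "0 \<le> r"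
    using M_classD(4)[OF assms(1)] by (cases "(\<integral>\<^sup>+ t. indicator {0..} t * ennreal (\<zeta> t powr p * t ^ (n - 1)) \<partial>lborel)") (auto simp: top_unique)
  ultimately have le: "e powr p * real N \<le> r" for N
  proof -
    have "ennreal (e powr p * real N) \<le> ennreal r"
      using \<open>\<And>N. ennreal (e powr p) * ennreal (real N) \<le> _\<close>[of N] r(1) by (simp add: ennreal_mult)
    then show ?thesis using r(2) by (simp add: ennreal_le_iff)
  qed
  have ep: "0 < e powr p" using assms(2) by simp
  obtain N :: nat where "r / e powr p < real N" using reals_Archimedean2 by blast
  then have "r < e powr p * real N" using ep by (simp add: field_simps)
  then show False using le[of N] by simp
qed

lemma ze_tendsto_inf:
  assumes "\<zeta> \<in> M_class n p" "0 \<le> p" "(w \<longlongrightarrow> \<infinity>) F"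
  shows "((\<lambda>k. zeta_ext \<zeta> (w k)) \<longlongrightarrow> 0) F"
proof (rule order_tendstoI)
  fix a :: real assume "a < 0"
  then show "\<forall>\<^sub>F k in F. a < zeta_ext \<zeta> (w k)"
    using ze_nonneg[OF assms(1)] by (intro always_eventually allI) (auto intro: less_le_trans)
next
  fix a :: real assume "0 < a"
  then obtain T where T: "\<zeta> T < a" using zeta_small[OF assms(1) _ assms(2)] by blast
  have "\<forall>\<^sub>F k in F. ereal T < w k" using assms(3) by (rule order_tendstoD) simp
  then show "\<forall>\<^sub>F k in F. zeta_ext \<zeta> (w k) < a"
    by eventually_elim (rule le_less_trans[OF ze_le[OF assms(1)] T], simp)
qed

lemma ze_tendsto_fin:
  assumes "\<zeta> \<in> M_class n p" "(w \<longlongrightarrow> ereal c) F"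
  shows "((\<lambda>k. zeta_ext \<zeta> (w k)) \<longlongrightarrow> \<zeta> c) F"
proof -
  have c: "continuous_on UNIV \<zeta>" by (rule M_classD(1)[OF assms(1)])
  have r: "((\<lambda>k. real_of_ereal (w k)) \<longlongrightarrow> c) F" by (rule lim_real_of_ereal[OF assms(2)])
  have 1: "((\<lambda>k. \<zeta> (real_of_ereal (w k))) \<longlongrightarrow> \<zeta> c) F"
    by (rule continuous_on_tendsto_compose[OF c r]) simp_all
  have "ereal c < \<infinity>" by simp
  then have "\<forall>\<^sub>F k in F. w k < \<infinity>" using assms(2) by (intro order_tendstoD(2))
  then have "\<forall>\<^sub>F k in F. \<zeta> (real_of_ereal (w k)) = zeta_ext \<zeta> (w k)"
    by eventually_elim (simp add: zeta_ext_def)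
  then show ?thesis using 1 by (rule Lim_transform_eventually[rotated])
qed

lemma liminf_le_const:
  fixes X :: "nat \<Rightarrow> ereal"
  assumes "\<And>k. X k \<le> c" shows "liminf X \<le> c"
proof -
  have "liminf X \<le> limsup X" by (rule Liminf_le_Limsup) simp
  also have "limsup X \<le> c" by (rule Limsup_bounded) (use assms in auto)
  finally show ?thesis .
qed

lemma lsc_closed_sublevel:
  fixes u :: "'a::metric_space \<Rightarrow> ereal"
  assumes "lsc_fun u" shows "closed {x. u x \<le> c}"
  unfolding closed_sequential_limits
proof (intro allI impI, elim conjE)
  fix X x assume X: "\<forall>k. X k \<in> {x. u x \<le> c}" "X \<longlonglongrightarrow> x"
  have "u x \<le> liminf (\<lambda>k. u (X k))" using assms X(2) unfolding lsc_fun_def by blast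
  also have "\<dots> \<le> c" using X(1) by (intro liminf_le_const) auto
  finally show "x \<in> {x. u x \<le> c}" by simp
qed

lemma lsc_open_superlevel:
  fixes u :: "'a::metric_space \<Rightarrow> ereal"
  assumes "lsc_fun u" shows "open {x. c < u x}"
proof -
  have "{x. c < u x} = - {x. u x \<le> c}" by auto
  then show ?thesis using lsc_closed_sublevel[OF assms, of c] by (simp add: open_Compl)
qed

lemma lsc_borel:
  fixes u :: "'a::euclidean_space \<Rightarrow> ereal"
  assumes "lsc_fun u" shows "u \<in> borel_measurable borel"
  unfolding borel_measurable_ereal_iff_Ioi
proof
  fix a
  have "u -` {a<..} = {x. a < u x}" by auto
  then show "u -` {a<..} \<inter> space borel \<in> sets borel"
    using lsc_open_superlevel[OF assms, of a] by auto
qed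

lemma lsc_lebesgue:
  fixes u :: "'a::euclidean_space \<Rightarrow> ereal"
  assumes "lsc_fun u" shows "u \<in> borel_measurable lebesgue"
  using lsc_borel[OF assms] by (intro measurable_completion) simp

lemma ze_borel:
  assumes "\<zeta> \<in> M_class n p" shows "zeta_ext \<zeta> \<in> borel_measurable borel"
proof -
  have zm: "\<zeta> \<in> borel_measurable borel"
    using M_classD(1)[OF assms] by (rule borel_measurable_continuous_onI)
  have m1: "(\<lambda>t::ereal. \<zeta> (real_of_ereal t)) \<in> borel_measurable borel"
    by (rule measurable_compose[OF borel_measurable_real_of_ereal zm]) simp
  have m2: "{t::ereal. t = \<infinity>} \<in> sets borel" by simp
  have "(\<lambda>t::ereal. if t = \<infinity> then 0 else \<zeta> (real_of_ereal t)) \<in> borel_measurable borel"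
    using m1 m2 by (intro measurable_If) simp_all
  then show ?thesis unfolding zeta_ext_def[abs_def] .
qed

lemma integrand_meas:
  fixes u v :: "'a::euclidean_space \<Rightarrow> ereal"
  assumes "\<zeta> \<in> M_class n p" "lsc_fun u" "lsc_fun v"
  shows "(\<lambda>x. \<bar>zeta_ext \<zeta> (u x) - zeta_ext \<zeta> (v x)\<bar> powr q) \<in> borel_measurable lebesgue"
proof -
  have [measurable]: "zeta_ext \<zeta> \<in> borel_measurable borel" "u \<in> borel_measurable lebesgue" "v \<in> borel_measurable lebesgue"
    using ze_borel[OF assms(1)] lsc_lebesgue assms(2,3) by auto
  have "(\<lambda>x. zeta_ext \<zeta> (u x)) \<in> borel_measurable lebesgue" "(\<lambda>x. zeta_ext \<zeta> (v x)) \<in> borel_measurable lebesgue"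
    by (rule measurable_compose[OF _ ze_borel[OF assms(1)]], simp)+
  then show ?thesis by (intro measurable_abs_powr borel_measurable_diff) simp_all
qed

lemma epi_nbhd:
  fixes f :: "nat \<Rightarrow> 'a::metric_space \<Rightarrow> ereal"
  assumes lim: "\<forall>X. X \<longlonglongrightarrow> x \<longrightarrow> u x \<le> liminf (\<lambda>k. f k (X k))" and c: "c < u x"
  shows "\<exists>r>0. eventually (\<lambda>k. \<forall>z\<in>ball x r. c < f k z) sequentially"
proof (rule ccontr)
  assume neg: "\<not> ?thesis"
  have fr: "\<forall>r>0. \<forall>N. \<exists>k\<ge>N. \<exists>z\<in>ball x r. f k z \<le> c"
  proof (intro allI impI)
    fix r :: real and N assume "0 < r"
    with neg have "\<not> eventually (\<lambda>k. \<forall>z\<in>ball x r. c < f k z) sequentially" by blast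
    then show "\<exists>k\<ge>N. \<exists>z\<in>ball x r. f k z \<le> c" by (auto simp: eventually_sequentially not_less)
  qed
  define P where "P m k \<longleftrightarrow> (\<exists>z\<in>ball x (1 / Suc m). f k z \<le> c)" for m k
  have frP: "\<exists>k\<ge>N. P m k" for m N using fr[rule_format, of "1 / Suc m" N] unfolding P_def by auto
  have "\<exists>s. \<forall>m. P m (s m) \<and> s m < s (Suc m)"
  proof (rule dependent_nat_choice)
    show "\<exists>k. P 0 k" using frP[of 0 0] by auto
    fix k m assume "P m k"
    show "\<exists>k'. P (Suc m) k' \<and> k < k'" using frP[of "Suc k" "Suc m"] by auto
  qed
  then obtain s where s: "\<And>m. P m (s m)" "\<And>m. s m < s (Suc m)" by blast
  have sm: "strict_mono s" using s(2) by (simp add: strict_mono_Suc_iff)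
  have "\<forall>m. \<exists>z. z \<in> ball x (1 / Suc m) \<and> f (s m) z \<le> c" using s(1) unfolding P_def by blast
  then obtain zz where zz: "\<And>m. zz m \<in> ball x (1 / Suc m)" "\<And>m. f (s m) (zz m) \<le> c" by metis
  define X where "X k = (if k \<in> range s then zz (inv s k) else x)" for k
  have inj: "inj s" using sm by (rule strict_mono_imp_inj_on)
  have Xs: "X (s m) = zz m" for m unfolding X_def using inj by simp
  have "X \<longlonglongrightarrow> x"
    unfolding lim_sequentially
  proof (intro allI impI)
    fix e :: real assume e: "0 < e"
    obtain M :: nat where M: "1 / e < real M" using reals_Archimedean2 by blast
    have M': "1 / real (Suc M) < e" using M e by (simp add: field_simps)
    show "\<exists>N. \<forall>n\<ge>N. dist (X n) x < e"
    proof (intro exI allI impI)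
      fix n assume n: "s M \<le> n"
      show "dist (X n) x < e"
      proof (cases "n \<in> range s")
        case True
        then obtain m where m: "n = s m" by auto
        then have "M \<le> m" using n sm by (simp add: strict_mono_less_eq)
        then have "1 / real (Suc m) \<le> 1 / real (Suc M)" by (simp add: frac_le)
        moreover have "dist (zz m) x < 1 / real (Suc m)" using zz(1)[of m] by (simp add: dist_commute)
        ultimately show ?thesis using m Xs M' by simp
      next
        case False then show ?thesis using e by (simp add: X_def)
      qed
    qed
  qed
  then have "u x \<le> liminf (\<lambda>k. f k (X k))" using lim by blast
  also have "\<dots> \<le> liminf ((\<lambda>k. f k (X k)) \<circ> s)" by (rule liminf_subseq_mono[OF sm])
  also have "\<dots> \<le> c" by (rule liminf_le_const) (simp add: Xs zz(2))
  finally show False using c by simp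
qed

lemma epi_compact:
  fixes f :: "nat \<Rightarrow> 'a::metric_space \<Rightarrow> ereal"
  assumes lim: "\<And>x. x \<in> S \<Longrightarrow> \<forall>X. X \<longlonglongrightarrow> x \<longrightarrow> u x \<le> liminf (\<lambda>k. f k (X k))"
    and S: "compact S" and c: "\<And>z. z \<in> S \<Longrightarrow> c < u z"
  shows "eventually (\<lambda>k. \<forall>z\<in>S. c < f k z) sequentially"
proof -
  have "\<forall>x\<in>S. \<exists>r>0. eventually (\<lambda>k. \<forall>z\<in>ball x r. c < f k z) sequentially"
  proof
    fix x assume x: "x \<in> S"
    show "\<exists>r>0. eventually (\<lambda>k. \<forall>z\<in>ball x r. c < f k z) sequentially"
      by (rule epi_nbhd[where f=f and u=u and x=x, OF lim[OF x] c[OF x]])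
  qed
  then obtain r where r: "\<And>x. x \<in> S \<Longrightarrow> r x > 0" "\<And>x. x \<in> S \<Longrightarrow> eventually (\<lambda>k. \<forall>z\<in>ball x (r x). c < f k z) sequentially"
    by metis
  have "S \<subseteq> (\<Union>x\<in>S. ball x (r x))" using r(1) by auto
  then obtain T where T: "T \<subseteq> S" "finite T" "S \<subseteq> (\<Union>x\<in>T. ball x (r x))"
    using compactE_image[OF S, of S "\<lambda>x. ball x (r x)"] by auto
  have "eventually (\<lambda>k. \<forall>x\<in>T. \<forall>z\<in>ball x (r x). c < f k z) sequentially"
    using T r(2) by (intro eventually_ball_finite) auto
  then show ?thesis by eventually_elim (use T(3) in blast)
qed

lemma lsc_bdd_below:
  fixes u :: "'a::metric_space \<Rightarrow> ereal"
  assumes "lsc_fun u" "\<And>x. u x \<noteq> -\<infinity>" "compact S"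
  shows "\<exists>m::real. \<forall>z\<in>S. ereal m < u z"
proof -
  define cc where "cc z = (if u z = \<infinity> then 0 else real_of_ereal (u z) - 1)" for z
  have ccl: "ereal (cc z) < u z" for z
    using assms(2)[of z] by (cases "u z") (auto simp: cc_def)
  have lim: "\<forall>X. X \<longlonglongrightarrow> x \<longrightarrow> u x \<le> liminf (\<lambda>k. (\<lambda>k. u) k (X k))" for x
    using assms(1) unfolding lsc_fun_def by blast
  have "\<forall>x\<in>S. \<exists>r>0. \<forall>z\<in>ball x r. ereal (cc x) < u z"
  proof
    fix x assume "x \<in> S"
    obtain r where "r > 0" "eventually (\<lambda>k. \<forall>z\<in>ball x r. ereal (cc x) < (\<lambda>k. u) k z) sequentially"
      using epi_nbhd[where f="\<lambda>k. u" and u=u and x=x, OF lim[of x] ccl[of x]] by blast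
    then show "\<exists>r>0. \<forall>z\<in>ball x r. ereal (cc x) < u z" by auto
  qed
  then obtain r where r: "\<And>x. x \<in> S \<Longrightarrow> r x > 0" "\<And>x z. x \<in> S \<Longrightarrow> z \<in> ball x (r x) \<Longrightarrow> ereal (cc x) < u z"
    by metis
  have "S \<subseteq> (\<Union>x\<in>S. ball x (r x))" using r(1) by auto
  then obtain T where T: "T \<subseteq> S" "finite T" "S \<subseteq> (\<Union>x\<in>T. ball x (r x))"
    using compactE_image[OF assms(3), of S "\<lambda>x. ball x (r x)"] by auto
  define m where "m = Min (insert 0 (cc ` T))"
  show ?thesis
  proof (intro exI ballI)
    fix z assume "z \<in> S"
    then obtain x where x: "x \<in> T" "z \<in> ball x (r x)" using T(3) by auto
    have "m \<le> cc x" unfolding m_def using T(2) x(1) by simp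
    then have "ereal m \<le> ereal (cc x)" by simp
    also have "\<dots> < u z" using r(2)[OF _ x(2)] x(1) T(1) by auto
    finally show "ereal m < u z" .
  qed
qed

lemma convex_growth:
  fixes f :: "'a::real_normed_vector \<Rightarrow> ereal"
  assumes cf: "convex_fun f" and nm: "\<And>x. f x \<noteq> -\<infinity>" and fc: "f c \<le> ereal \<alpha>" and R: "R > 0"
    and sph: "\<And>z. norm (z - c) = R \<Longrightarrow> ereal (\<alpha> + 1) \<le> f z"
    and inn: "\<And>z. norm (z - c) \<le> R \<Longrightarrow> ereal m \<le> f z"
  shows "ereal (norm (y - c) / R + min m \<alpha> - 1) \<le> f y"
proof (cases "norm (y - c) \<le> R")
  case True
  then have "norm (y - c) / R \<le> 1" using R by simp
  then have "ereal (norm (y - c) / R + min m \<alpha> - 1) \<le> ereal m" by simp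
  also have "\<dots> \<le> f y" using inn[OF True] .
  finally show ?thesis .
next
  case False
  define d where "d = norm (y - c)"
  have dR: "R < d" using False d_def by simp
  show ?thesis
  proof (cases "f y")
    case PInf then show ?thesis by simp
  next
    case MInf then show ?thesis using nm by simp
  next
    case (real b)
    obtain a0 where a0: "f c = ereal a0" "a0 \<le> \<alpha>" using fc nm[of c] by (cases "f c") auto
    define t where "t = R / d"
    have t01: "0 < t" "t < 1" using dR R by (auto simp: t_def)
    define z where "z = (1 - t) *\<^sub>R c + t *\<^sub>R y"
    have "z - c = t *\<^sub>R (y - c)" by (simp add: z_def algebra_simps)
    then have "norm (z - c) = t * d" using t01 by (simp add: d_def)
    also have "\<dots> = R" using dR R by (simp add: t_def)
    finally have "ereal (\<alpha> + 1) \<le> f z" by (rule sph)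
    also have "f z \<le> ereal (1 - t) * f c + ereal t * f y"
      using cf t01 unfolding convex_fun_def z_def by auto
    also have "\<dots> = ereal ((1 - t) * a0 + t * b)" using a0 real by simp
    finally have 1: "\<alpha> + 1 \<le> (1 - t) * a0 + t * b" by simp
    have "(1 - t) * a0 \<le> (1 - t) * \<alpha>" using a0(2) t01 by (intro mult_left_mono) auto
    then have "1 \<le> t * (b - \<alpha>)" using 1 by (simp add: algebra_simps)
    then have "1 / t \<le> b - \<alpha>" using t01 by (simp add: field_simps)
    moreover have "1 / t = d / R" using R dR by (simp add: t_def)
    ultimately have "d / R + min m \<alpha> - 1 \<le> b" by linarith
    then show ?thesis using real d_def by simp
  qed
qed

lemma Conv_coeD:
  fixes u :: "'a::euclidean_space \<Rightarrow> ereal"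
  assumes "u \<in> Conv_coe"
  shows "\<And>x. u x \<noteq> -\<infinity>" "\<exists>x. u x < \<infinity>" "lsc_fun u" "coercive_fun u" "convex_fun u"
    "aff_dim (dom_fun u) = int DIM('a)"
  using assms unfolding Conv_coe_def proper_fun_def by auto

lemma unif_coercive:
  fixes uk :: "nat \<Rightarrow> 'a::euclidean_space \<Rightarrow> ereal"
  assumes uk: "\<And>k. uk k \<in> Conv_coe" and u: "u \<in> Conv_coe" and epi: "epi_converges uk u"
  shows "\<exists>a>0. \<exists>b K. \<forall>k\<ge>K. \<forall>y. ereal (a * norm y - b) \<le> uk k y"
proof -
  obtain x0 where "u x0 < \<infinity>" using Conv_coeD(2)[OF u] by blast
  then obtain v0 where v0: "u x0 = ereal v0" using Conv_coeD(1)[OF u, of x0] by (cases "u x0") auto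
  define \<alpha> where "\<alpha> = v0 + 1"
  have "eventually (\<lambda>z. ereal (\<alpha> + 2) < u z) at_infinity"
    using Conv_coeD(4)[OF u] unfolding coercive_fun_def by (rule order_tendstoD) simp
  then obtain B where B: "\<And>z. B \<le> norm z \<Longrightarrow> ereal (\<alpha> + 2) < u z"
    unfolding eventually_at_infinity by blast
  define R where "R = \<bar>B\<bar> + norm x0 + 2"
  have R: "R > 0" unfolding R_def using norm_ge_zero[of x0] abs_ge_zero[of B] by linarith
  define S1 where "S1 = cball x0 (R + 1)"
  define S2 where "S2 = {z. B \<le> norm z} \<inter> cball x0 (R + 1)"
  have cS1: "compact S1" by (simp add: S1_def)
  have "closed {z::'a. B \<le> norm z}"
    using closed_Collect_le[OF continuous_on_const[of UNIV B] continuous_on_norm_id] by simp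
  then have cS2: "compact S2" unfolding S2_def by (subst Int_commute, intro compact_Int_closed) auto
  obtain m0 where m0: "\<And>z. z \<in> S1 \<Longrightarrow> ereal m0 < u z"
    using lsc_bdd_below[OF Conv_coeD(3)[OF u] Conv_coeD(1)[OF u] cS1] by blast
  have lim: "\<forall>X. X \<longlonglongrightarrow> x \<longrightarrow> u x \<le> liminf (\<lambda>k. uk k (X k))" for x
    using epi unfolding epi_converges_def by blast
  have ev1: "eventually (\<lambda>k. \<forall>z\<in>S1. ereal m0 < uk k z) sequentially"
    by (rule epi_compact[OF lim cS1 m0])
  have "ereal (\<alpha> + 1) < u z" if "z \<in> S2" for z
  proof -
    have "ereal (\<alpha> + 1) < ereal (\<alpha> + 2)" by simp
    also have "\<dots> < u z" using B that by (auto simp: S2_def)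
    finally show ?thesis .
  qed
  then have ev2: "eventually (\<lambda>k. \<forall>z\<in>S2. ereal (\<alpha> + 1) < uk k z) sequentially"
    by (rule epi_compact[OF lim cS2])
  obtain X where X: "X \<longlonglongrightarrow> x0" "limsup (\<lambda>k. uk k (X k)) \<le> u x0"
    using epi unfolding epi_converges_def by blast
  have "limsup (\<lambda>k. uk k (X k)) < ereal \<alpha>" using X(2) v0 by (simp add: \<alpha>_def le_less_trans)
  then have ev3: "eventually (\<lambda>k. uk k (X k) < ereal \<alpha>) sequentially" by (rule Limsup_lessD)
  have ev4: "eventually (\<lambda>k. dist (X k) x0 < 1) sequentially"
    using X(1) by (rule tendstoD) simp
  have "eventually (\<lambda>k. (\<forall>z\<in>S1. ereal m0 < uk k z) \<and> (\<forall>z\<in>S2. ereal (\<alpha> + 1) < uk k z)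
      \<and> uk k (X k) < ereal \<alpha> \<and> dist (X k) x0 < 1) sequentially"
    using ev1 ev2 ev3 ev4 by eventually_elim blast
  then obtain K where K: "\<And>k. k \<ge> K \<Longrightarrow> (\<forall>z\<in>S1. ereal m0 < uk k z) \<and> (\<forall>z\<in>S2. ereal (\<alpha> + 1) < uk k z)
      \<and> uk k (X k) < ereal \<alpha> \<and> dist (X k) x0 < 1"
    unfolding eventually_sequentially by blast
  define b where "b = (norm x0 + 1) / R - min m0 \<alpha> + 1"
  show ?thesis
  proof (intro exI conjI allI impI)
    show "0 < 1 / R" using R by simp
    fix k y assume k: "K \<le> k"
    note Kk = K[OF k]
    have dX: "norm (X k - x0) < 1" using Kk by (simp add: dist_norm)
    have sph: "ereal (\<alpha> + 1) \<le> uk k z" if z: "norm (z - X k) = R" for z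
    proof -
      have "norm (z - x0) \<le> norm (z - X k) + norm (X k - x0)"
        using norm_triangle_ineq[of "z - X k" "X k - x0"] by simp
      then have z1: "z \<in> cball x0 (R + 1)" using z dX by (simp add: dist_norm norm_minus_commute)
      have "norm (z - X k) \<le> norm z + norm (X k - x0) + norm x0"
        using norm_triangle_ineq4[of z "X k"] norm_triangle_ineq[of "X k - x0" x0] by simp
      then have "B \<le> norm z" using z dX by (simp add: R_def)
      then have "z \<in> S2" using z1 by (simp add: S2_def)
      then show ?thesis using Kk by (auto intro: less_imp_le)
    qed
    have inn: "ereal m0 \<le> uk k z" if z: "norm (z - X k) \<le> R" for z
    proof -
      have "norm (z - x0) \<le> norm (z - X k) + norm (X k - x0)"
        using norm_triangle_ineq[of "z - X k" "X k - x0"] by simp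
      then have "z \<in> S1" using z dX by (simp add: S1_def dist_norm norm_minus_commute)
      then show ?thesis using Kk by (auto intro: less_imp_le)
    qed
    have g: "ereal (norm (y - X k) / R + min m0 \<alpha> - 1) \<le> uk k y"
      by (rule convex_growth[OF Conv_coeD(5)[OF uk] Conv_coeD(1)[OF uk] _ R sph inn])
         (use Kk in \<open>auto intro: less_imp_le\<close>)
    have "norm y - norm x0 - 1 \<le> norm (y - X k)"
      using norm_triangle_ineq2[of y "X k"] norm_triangle_ineq[of "X k - x0" x0] dX by simp
    then have "(norm y - norm x0 - 1) / R \<le> norm (y - X k) / R" using R by (simp add: divide_right_mono)
    then have "1 / R * norm y - b \<le> norm (y - X k) / R + min m0 \<alpha> - 1"
      by (simp add: b_def diff_divide_distrib add_divide_distrib)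
    then show "ereal (1 / R * norm y - b) \<le> uk k y" using g by (metis ereal_less_eq(3) order_trans)
  qed
qed

lemma sum_fin:
  assumes z: "\<zeta> \<in> M_class n p" and p: "0 \<le> p"
  shows "(\<Sum>j. ennreal (\<zeta> (real j - b) powr p * (real j + 1) ^ (n - 1))) < \<infinity>"
proof -
  define F where "F t = ennreal (\<zeta> t powr p * t ^ (n - 1))" for t
  define B :: nat where "B = nat \<lceil>b\<rceil>"
  have Bb: "b \<le> real B" unfolding B_def by linarith
  define J0 where "J0 = 2 * B + 3"
  define I where "I j = (if J0 \<le> j then {real j - real B - 1 ..< real j - real B} else {})" for j :: nat
  define tm where "tm j = ennreal (\<zeta> (real j - b) powr p * (real j + 1) ^ (n - 1))" for j
  define d where "d j = (if j < J0 then tm j else 0)" for j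
  define e where "e j = 2 ^ (n - 1) * (\<integral>\<^sup>+ t. indicator (I j) t * F t \<partial>lborel)" for j
  have zm: "\<zeta> \<in> borel_measurable borel"
    using M_classD(1)[OF z] by (rule borel_measurable_continuous_onI)
  have Fm: "F \<in> borel_measurable lborel" unfolding F_def using zm by measurable
  have Im: "I j \<in> sets borel" for j by (simp add: I_def)
  have Fm': "F \<in> borel_measurable borel" using Fm by simp
  note [measurable] = Im Fm'
  have tm_le: "tm j \<le> d j + e j" for j
  proof (cases "J0 \<le> j")
    case False then show ?thesis by (simp add: d_def)
  next
    case True
    have Ij: "I j = {real j - real B - 1 ..< real j - real B}" using True by (simp add: I_def)
    have pt: "indicator (I j) t * tm j \<le> 2 ^ (n - 1) * (indicator (I j) t * F t)" for t
    proof (cases "t \<in> I j")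
      case False then show ?thesis by simp
    next
      case tI: True
      have t1: "real j - real B - 1 \<le> t" "t < real j - real B" using tI Ij by auto
      have "real j - b \<ge> t" using t1 Bb by linarith
      then have "\<zeta> (real j - b) \<le> \<zeta> t" by (rule zeta_le[OF z])
      then have zz: "\<zeta> (real j - b) powr p \<le> \<zeta> t powr p"
        using M_classD(3)[OF z] p by (intro powr_mono2) (auto intro: less_imp_le)
      have "real (2 * B + 3) \<le> real j" using True unfolding J0_def by (simp only: of_nat_le_iff)
      then have "2 * real B + 3 \<le> real j" by simp
      then have "(real j + 1) / 2 \<le> real j - real B - 1" by (simp add: field_simps)
      then have jt: "(real j + 1) / 2 \<le> t" using t1 by linarith
      have "(real j + 1) ^ (n - 1) = 2 ^ (n - 1) * ((real j + 1) / 2) ^ (n - 1)"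
        by (simp add: power_divide)
      also have "\<dots> \<le> 2 ^ (n - 1) * t ^ (n - 1)"
        using jt by (intro mult_left_mono power_mono) auto
      finally have "\<zeta> (real j - b) powr p * (real j + 1) ^ (n - 1) \<le> \<zeta> t powr p * (2 ^ (n - 1) * t ^ (n - 1))"
        using zz by (intro mult_mono) auto
      then have "ennreal (\<zeta> (real j - b) powr p * (real j + 1) ^ (n - 1)) \<le> ennreal (2 ^ (n - 1) * (\<zeta> t powr p * t ^ (n - 1)))"
        by (intro ennreal_leI) (simp add: mult_ac)
      also have "\<dots> = 2 ^ (n - 1) * F t"
      proof -
        have e2: "ennreal ((2::real) ^ (n - 1)) = 2 ^ (n - 1)" by (metis ennreal_numeral ennreal_power zero_le_numeral)
        have "0 \<le> \<zeta> t powr p * t ^ (n - 1)" using jt by simp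
        then show ?thesis unfolding F_def by (metis e2 ennreal_mult zero_le_numeral zero_le_power)
      qed
      finally have "ennreal (\<zeta> (real j - b) powr p * (real j + 1) ^ (n - 1)) \<le> 2 ^ (n - 1) * F t" .
      then show ?thesis using tI by (simp add: tm_def)
    qed
    have "tm j = (\<integral>\<^sup>+ t. indicator (I j) t * tm j \<partial>lborel)"
      using Ij by (simp add: nn_integral_multc)
    also have "\<dots> \<le> (\<integral>\<^sup>+ t. 2 ^ (n - 1) * (indicator (I j) t * F t) \<partial>lborel)"
      by (intro nn_integral_mono pt)
    also have "\<dots> = e j" unfolding e_def by (rule nn_integral_cmult) measurable
    finally show ?thesis by (simp add: d_def True)
  qed
  have eq1: "(\<Sum>j. tm j) \<le> (\<Sum>j. d j) + (\<Sum>j. e j)"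
  proof -
    have "(\<Sum>j. tm j) \<le> (\<Sum>j. d j + e j)" by (intro suminf_le tm_le summableI)
    also have "\<dots> = (\<Sum>j. d j) + (\<Sum>j. e j)" by (intro suminf_add[symmetric] summableI)
    finally show ?thesis .
  qed
  have eq2: "(\<Sum>j. d j) = (\<Sum>j<J0. d j)" by (rule suminf_finite) (auto simp: d_def)
  have eq3: "(\<Sum>j. e j) = 2 ^ (n - 1) * (\<integral>\<^sup>+ t. indicator (\<Union>j. I j) t * F t \<partial>lborel)"
  proof -
    have "(\<Sum>j. e j) = 2 ^ (n - 1) * (\<Sum>j. \<integral>\<^sup>+ t. indicator (I j) t * F t \<partial>lborel)"
      by (simp add: e_def)
    also have "(\<Sum>j. \<integral>\<^sup>+ t. indicator (I j) t * F t \<partial>lborel) = (\<integral>\<^sup>+ t. (\<Sum>j. indicator (I j) t * F t) \<partial>lborel)"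
      by (rule nn_integral_suminf[symmetric]) measurable
    also have "\<dots> = (\<integral>\<^sup>+ t. indicator (\<Union>j. I j) t * F t \<partial>lborel)"
    proof -
      have dis: "disjoint_family I"
        unfolding disjoint_family_on_def I_def by (auto simp: not_le)
      show ?thesis using suminf_indicator[OF dis] by (simp add: ennreal_suminf_multc)
    qed
    finally show ?thesis .
  qed
  have le4: "(\<integral>\<^sup>+ t. indicator (\<Union>j. I j) t * F t \<partial>lborel) \<le> (\<integral>\<^sup>+ t. indicator {0..} t * F t \<partial>lborel)"
  proof (intro nn_integral_mono)
    fix t
    have "(\<Union>j. I j) \<subseteq> {0..}" unfolding I_def J0_def by auto
    then have "indicator (\<Union>j. I j) t \<le> (indicator {0..} t :: ennreal)"
      by (auto split: split_indicator)
    then show "indicator (\<Union>j. I j) t * F t \<le> indicator {0..} t * F t"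
      by (rule mult_right_mono) simp
  qed
  have "(\<Sum>j. tm j) \<le> (\<Sum>j<J0. d j) + 2 ^ (n - 1) * (\<integral>\<^sup>+ t. indicator {0..} t * F t \<partial>lborel)"
  proof -
    have "(\<Sum>j. tm j) \<le> (\<Sum>j<J0. d j) + 2 ^ (n - 1) * (\<integral>\<^sup>+ t. indicator (\<Union>j. I j) t * F t \<partial>lborel)"
      using eq1 eq2 eq3 by simp
    also have "\<dots> \<le> (\<Sum>j<J0. d j) + 2 ^ (n - 1) * (\<integral>\<^sup>+ t. indicator {0..} t * F t \<partial>lborel)"
      by (intro add_left_mono mult_left_mono le4) simp
    finally show ?thesis .
  qed
  also have "\<dots> < \<infinity>"
  proof -
    have 1: "(\<Sum>j<J0. d j) < top" by (simp add: d_def tm_def)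
    have "(\<integral>\<^sup>+ t. indicator {0..} t * F t \<partial>lborel) < top"
      using M_classD(4)[OF z] unfolding F_def by simp
    then have 2: "2 ^ (n - 1) * (\<integral>\<^sup>+ t. indicator {0..} t * F t \<partial>lborel) < top"
      by (simp add: ennreal_mult_less_top power_less_top_ennreal)
    show ?thesis using 1 2 by simp
  qed
  finally show ?thesis unfolding tm_def .
qed

lemma power_diff_le:
  fixes x y :: real
  assumes "0 \<le> x" "x \<le> y"
  shows "y ^ Suc n - x ^ Suc n \<le> real (Suc n) * y ^ n * (y - x)"
proof (induction n)
  case 0 then show ?case by simp
next
  case (Suc n)
  have "y ^ Suc (Suc n) - x ^ Suc (Suc n) = y * (y ^ Suc n - x ^ Suc n) + x ^ Suc n * (y - x)"
    by (simp add: algebra_simps)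
  also have "\<dots> \<le> y * (real (Suc n) * y ^ n * (y - x)) + y ^ Suc n * (y - x)"
    using Suc assms by (intro add_mono mult_left_mono mult_right_mono power_mono) auto
  also have "\<dots> = real (Suc (Suc n)) * y ^ Suc n * (y - x)" by (simp add: algebra_simps)
  finally show ?case .
qed

lemma radial_integrable_lborel:
  fixes a b :: real
  assumes z: "\<zeta> \<in> M_class DIM('a::euclidean_space) p" and p: "0 \<le> p" and a: "0 < a"
  shows "integrable lborel (\<lambda>y::'a. \<zeta> (a * norm y - b) powr p)"
proof -
  define n where "n = DIM('a)"
  have n1: "n = Suc (n - 1)" unfolding n_def using DIM_positive[where 'a='a] by simp
  define V where "V = unit_ball_vol (real n)"
  have V0: "0 \<le> V" unfolding V_def by (rule unit_ball_vol_nonneg) simp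
  define A where "A j = ball (0::'a) ((real j + 1) / a) - ball 0 (real j / a)" for j :: nat
  define g where "g y = \<zeta> (a * norm y - b) powr p" for y :: 'a
  define h where "h j = ennreal (\<zeta> (real j - b) powr p)" for j :: nat
  have zm: "\<zeta> \<in> borel_measurable borel"
    using M_classD(1)[OF z] by (rule borel_measurable_continuous_onI)
  have g_abs: "g y = \<bar>\<zeta> (a * norm y - b)\<bar> powr p" for y
    using M_classD(3)[OF z] by (simp add: g_def less_imp_le)
  have gm: "g \<in> borel_measurable lborel"
  proof -
    have "(\<lambda>y::'a. a * norm y - b) \<in> borel_measurable borel" by measurable
    then have "(\<lambda>y::'a. \<zeta> (a * norm y - b)) \<in> borel_measurable borel"
      by (rule measurable_compose) (rule zm)
    then show ?thesis unfolding g_abs[abs_def] by (intro measurable_abs_powr) simp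
  qed
  have Am: "A j \<in> sets lborel" for j by (simp add: A_def)
  have pt: "ennreal (g y) \<le> (\<Sum>j. h j * indicator (A j) y)" for y
  proof -
    define j where "j = nat \<lfloor>a * norm y\<rfloor>"
    have j1: "real j \<le> a * norm y" "a * norm y < real j + 1"
      unfolding j_def using a by (auto simp: of_nat_nat)
    then have yA: "y \<in> A j" using a by (auto simp: A_def field_simps)
    have "\<zeta> (a * norm y - b) \<le> \<zeta> (real j - b)" using j1 by (intro zeta_le[OF z]) simp
    then have "g y \<le> \<zeta> (real j - b) powr p"
      unfolding g_def using M_classD(3)[OF z] p by (intro powr_mono2) (auto intro: less_imp_le)
    then have "ennreal (g y) \<le> h j * indicator (A j) y" using yA by (simp add: h_def ennreal_leI)
    also have "\<dots> \<le> (\<Sum>j. h j * indicator (A j) y)"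
      using sum_le_suminf[of "\<lambda>j. h j * indicator (A j) y" "{j}", OF summableI] by (metis (no_types, lifting) finite.emptyI finite.insertI sum.insert sum.empty add.right_neutral empty_iff zero_le)
    finally show ?thesis .
  qed
  have mA: "emeasure lborel (A j) \<le> ennreal (V / a ^ n * (real n * (real j + 1) ^ (n - 1)))" for j
  proof -
    have sub: "ball (0::'a) (real j / a) \<subseteq> ball 0 ((real j + 1) / a)"
    proof -
      have "real j / a \<le> (real j + 1) / a" using a by (simp add: divide_right_mono)
      then show ?thesis by auto
    qed
    have "emeasure lborel (A j) = emeasure lborel (ball (0::'a) ((real j + 1) / a)) - emeasure lborel (ball (0::'a) (real j / a))"
      unfolding A_def using sub emeasure_lborel_ball_finite[of "0::'a" "real j / a"] by (intro emeasure_Diff) auto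
    also have "\<dots> = ennreal (V * ((real j + 1) / a) ^ n) - ennreal (V * (real j / a) ^ n)"
      using a by (simp add: emeasure_ball V_def n_def)
    also have "\<dots> = ennreal (V * ((real j + 1) / a) ^ n - V * (real j / a) ^ n)"
      using V0 a by (intro ennreal_minus) simp
    also have "\<dots> \<le> ennreal (V / a ^ n * (real n * (real j + 1) ^ (n - 1)))"
    proof (intro ennreal_leI)
      have "(real j + 1) ^ n - real j ^ n \<le> real n * (real j + 1) ^ (n - 1) * ((real j + 1) - real j)"
        using power_diff_le[of "real j" "real j + 1" "n - 1"] n1 by simp
      then have "(real j + 1) ^ n - real j ^ n \<le> real n * (real j + 1) ^ (n - 1)" by simp
      then have "V / a ^ n * ((real j + 1) ^ n - real j ^ n) \<le> V / a ^ n * (real n * (real j + 1) ^ (n - 1))"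
        using V0 a by (intro mult_left_mono) auto
      moreover have "V * (x / a) ^ n = V / a ^ n * x ^ n" for x by (simp add: power_divide)
      ultimately show "V * ((real j + 1) / a) ^ n - V * (real j / a) ^ n \<le> V / a ^ n * (real n * (real j + 1) ^ (n - 1))"
        by (simp only: right_diff_distrib)
    qed
    finally show ?thesis .
  qed
  have "(\<integral>\<^sup>+ y. ennreal (g y) \<partial>lborel) \<le> (\<integral>\<^sup>+ y. (\<Sum>j. h j * indicator (A j) y) \<partial>lborel)"
    by (intro nn_integral_mono pt)
  also have "\<dots> = (\<Sum>j. \<integral>\<^sup>+ y. h j * indicator (A j) y \<partial>lborel)"
    by (rule nn_integral_suminf) (use Am in simp)
  also have "\<dots> = (\<Sum>j. h j * emeasure lborel (A j))"
    using Am by (simp add: nn_integral_cmult_indicator)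
  also have "\<dots> \<le> (\<Sum>j. h j * ennreal (V / a ^ n * (real n * (real j + 1) ^ (n - 1))))"
    by (intro suminf_le summableI mult_left_mono mA) simp
  also have "\<dots> = ennreal (V / a ^ n * real n) * (\<Sum>j. ennreal (\<zeta> (real j - b) powr p * (real j + 1) ^ (n - 1)))"
  proof -
    have "h j * ennreal (V / a ^ n * (real n * (real j + 1) ^ (n - 1))) =
          ennreal (V / a ^ n * real n) * ennreal (\<zeta> (real j - b) powr p * (real j + 1) ^ (n - 1))" for j
      unfolding h_def using V0 a by (simp add: ennreal_mult'[symmetric] mult_ac)
    then show ?thesis by simp
  qed
  also have "\<dots> < \<infinity>"
    using sum_fin[OF z[folded n_def] p, of b] by (simp add: ennreal_mult_less_top)
  finally have fin: "(\<integral>\<^sup>+ y. ennreal (g y) \<partial>lborel) < \<infinity>" .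
  have "integrable lborel g"
    using gm fin by (intro integrableI_nonneg) (auto simp: g_def)
  then show ?thesis unfolding g_def .
qed

lemma radial_integrable:
  fixes a b :: real
  assumes z: "\<zeta> \<in> M_class DIM('a::euclidean_space) p" and p: "0 \<le> p" and a: "0 < a"
  shows "integrable lebesgue (\<lambda>y::'a. \<zeta> (a * norm y - b) powr p)"
proof -
  have zm: "\<zeta> \<in> borel_measurable borel"
    using M_classD(1)[OF z] by (rule borel_measurable_continuous_onI)
  have g_abs: "\<zeta> (a * norm y - b) powr p = \<bar>\<zeta> (a * norm y - b)\<bar> powr p" for y :: 'a
    using M_classD(3)[OF z] by (simp add: less_imp_le)
  have "(\<lambda>y::'a. a * norm y - b) \<in> borel_measurable borel" by measurable
  then have "(\<lambda>y::'a. \<zeta> (a * norm y - b)) \<in> borel_measurable borel"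
    by (rule measurable_compose) (rule zm)
  then have gm: "(\<lambda>y::'a. \<zeta> (a * norm y - b) powr p) \<in> borel_measurable lborel"
    unfolding g_abs by (intro measurable_abs_powr) simp
  show ?thesis using radial_integrable_lborel[OF assms] gm by (simp add: integrable_completion)
qed

lemma powr_convex_ineq:
  fixes x y l p :: real
  assumes x: "0 \<le> x" and y: "0 \<le> y" and l: "0 \<le> l" "l \<le> 1" and p: "1 \<le> p"
  shows "(l * x + (1 - l) * y) powr p \<le> l * x powr p + (1 - l) * y powr p"
proof -
  have key: "(c * z) powr p \<le> c * z powr p" if "0 \<le> c" "c \<le> 1" "0 \<le> z" for c z :: real
  proof -
    have "(c * z) powr p = c powr p * z powr p" by (rule powr_mult)
    also have "c powr p \<le> c powr 1" using that p by (intro powr_mono') auto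
    then have "c powr p * z powr p \<le> c * z powr p" using that by (intro mult_right_mono) (auto simp: powr_one)
    finally show ?thesis .
  qed
  show ?thesis
  proof (cases "x = 0 \<or> y = 0")
    case True
    then show ?thesis
    proof
      assume "x = 0"
      then show ?thesis using key[of "1 - l" y] l y p by simp
    next
      assume "y = 0"
      then show ?thesis using key[of l x] l x p by simp
    qed
  next
    case False
    then have "x \<in> {0<..}" "y \<in> {0<..}" using x y by auto
    from convex_onD[OF powr_convex[OF p] _ _ this, of "1 - l"] l
    show ?thesis by (simp add: algebra_simps)
  qed
qed

lemma minkowski:
  fixes f g h :: "'x \<Rightarrow> real"
  assumes p: "1 \<le> p"
    and f0: "\<And>x. 0 \<le> f x" and g0: "\<And>x. 0 \<le> g x" and h0: "\<And>x. 0 \<le> h x"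
    and hfg: "\<And>x. h x \<le> f x + g x"
    and fi: "integrable M (\<lambda>x. f x powr p)" and gi: "integrable M (\<lambda>x. g x powr p)"
    and hi: "integrable M (\<lambda>x. h x powr p)"
  shows "(integral\<^sup>L M (\<lambda>x. h x powr p)) powr (1 / p)
      \<le> (integral\<^sup>L M (\<lambda>x. f x powr p)) powr (1 / p) + (integral\<^sup>L M (\<lambda>x. g x powr p)) powr (1 / p)"
proof -
  define IF where "IF = integral\<^sup>L M (\<lambda>x. f x powr p)"
  define IG where "IG = integral\<^sup>L M (\<lambda>x. g x powr p)"
  define IH where "IH = integral\<^sup>L M (\<lambda>x. h x powr p)"
  have IF0: "0 \<le> IF" unfolding IF_def by (intro integral_nonneg_AE) auto
  have IG0: "0 \<le> IG" unfolding IG_def by (intro integral_nonneg_AE) auto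
  have IH0: "0 \<le> IH" unfolding IH_def by (intro integral_nonneg_AE) auto
  define A where "A = IF powr (1 / p)"
  define B where "B = IG powr (1 / p)"
  have A0: "0 \<le> A" "A powr p = IF" using IF0 p by (auto simp: A_def powr_powr powr_one)
  have B0: "0 \<le> B" "B powr p = IG" using IG0 p by (auto simp: B_def powr_powr powr_one)
  have main: "IH powr (1 / p) \<le> A + B + 2 * e" if e: "0 < e" for e
  proof -
    define A' where "A' = A + e"
    define B' where "B' = B + e"
    define S where "S = A' + B'"
    define l where "l = A' / S"
    have A'p: "0 < A'" and B'p: "0 < B'" using A0 B0 e by (auto simp: A'_def B'_def)
    have Sp: "0 < S" using A'p B'p by (simp add: S_def)
    have l01: "0 \<le> l" "l \<le> 1" using A'p B'p by (auto simp: l_def S_def)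
    have l1: "1 - l = B' / S" using A'p B'p by (simp add: l_def S_def field_simps)
    have pt: "h x powr p / S powr p \<le> l * (f x powr p / A' powr p) + (1 - l) * (g x powr p / B' powr p)" for x
    proof -
      have "h x powr p / S powr p = (h x / S) powr p" by (simp add: powr_divide)
      also have "\<dots> \<le> ((f x + g x) / S) powr p"
        using h0 hfg Sp p by (intro powr_mono2 divide_right_mono) auto
      also have "(f x + g x) / S = l * (f x / A') + (1 - l) * (g x / B')"
        using A'p B'p Sp by (simp add: l1 l_def field_simps) (simp add: S_def algebra_simps)
      also have "(l * (f x / A') + (1 - l) * (g x / B')) powr p \<le> l * (f x / A') powr p + (1 - l) * (g x / B') powr p"
        using f0 g0 A'p B'p l01 p by (intro powr_convex_ineq) auto
      finally show ?thesis by (simp add: powr_divide)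
    qed
    have "IH / S powr p = integral\<^sup>L M (\<lambda>x. h x powr p / S powr p)" unfolding IH_def by simp
    also have "\<dots> \<le> integral\<^sup>L M (\<lambda>x. l * (f x powr p / A' powr p) + (1 - l) * (g x powr p / B' powr p))"
      using fi gi hi pt by (intro integral_mono) auto
    also have "\<dots> = l * (IF / A' powr p) + (1 - l) * (IG / B' powr p)"
      using fi gi by (simp add: IF_def IG_def)
    also have "\<dots> \<le> l * 1 + (1 - l) * 1"
    proof (intro add_mono mult_left_mono)
      have "IF = A powr p" using A0 by simp
      also have "\<dots> \<le> A' powr p" using A0 e p by (intro powr_mono2) (auto simp: A'_def)
      finally show "IF / A' powr p \<le> 1" using A'p by simp
      have "IG = B powr p" using B0 by simp
      also have "\<dots> \<le> B' powr p" using B0 e p by (intro powr_mono2) (auto simp: B'_def)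
      finally show "IG / B' powr p \<le> 1" using B'p by simp
    qed (use l01 in auto)
    finally have "IH \<le> S powr p" using Sp by (simp add: divide_le_eq)
    then have "IH powr (1 / p) \<le> (S powr p) powr (1 / p)" using IH0 p by (intro powr_mono2) auto
    also have "\<dots> = S" using Sp p by (simp add: powr_powr)
    finally show ?thesis by (simp add: S_def A'_def B'_def)
  qed
  have "IH powr (1 / p) \<le> A + B"
  proof (rule field_le_epsilon)
    fix e :: real assume "0 < e"
    then show "IH powr (1 / p) \<le> A + B + e" using main[of "e / 2"] by simp
  qed
  then show ?thesis by (simp add: IH_def A_def B_def IF_def IG_def)
qed

lemma epi_const:
  fixes u :: "'a::euclidean_space \<Rightarrow> ereal"
  assumes "u \<in> Conv_coe" shows "epi_converges (\<lambda>k. u) u"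
  unfolding epi_converges_def
proof (rule allI, rule conjI)
  fix x
  show "\<forall>X. X \<longlonglongrightarrow> x \<longrightarrow> u x \<le> liminf (\<lambda>k. u (X k))"
    using Conv_coeD(3)[OF assms] unfolding lsc_fun_def by blast
  show "\<exists>X. X \<longlonglongrightarrow> x \<and> limsup (\<lambda>k. u (X k)) \<le> u x"
    by (intro exI[of _ "\<lambda>k. x"]) (simp add: Limsup_const)
qed

lemma single_bound:
  fixes u :: "'a::euclidean_space \<Rightarrow> ereal"
  assumes "u \<in> Conv_coe" shows "\<exists>a>0. \<exists>b. \<forall>y. ereal (a * norm y - b) \<le> u y"
proof -
  obtain a b and K :: nat where "a > 0" "\<forall>k\<ge>K. \<forall>y. ereal (a * norm y - b) \<le> (\<lambda>k. u) k y"
    using unif_coercive[of "\<lambda>k. u" u, OF assms assms epi_const[OF assms]] by blast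
  then have "\<forall>y. ereal (a * norm y - b) \<le> u y" using le_refl[of K] by blast
  then show ?thesis using \<open>a > 0\<close> by blast
qed

lemma pair_bound:
  fixes u v :: "'a::euclidean_space \<Rightarrow> ereal"
  assumes "u \<in> Conv_coe" "v \<in> Conv_coe"
  shows "\<exists>a>0. \<exists>b. \<forall>y. ereal (a * norm y - b) \<le> u y \<and> ereal (a * norm y - b) \<le> v y"
proof -
  obtain a1 b1 where 1: "a1 > 0" "\<And>y. ereal (a1 * norm y - b1) \<le> u y" using single_bound[OF assms(1)] by blast
  obtain a2 b2 where 2: "a2 > 0" "\<And>y. ereal (a2 * norm y - b2) \<le> v y" using single_bound[OF assms(2)] by blast
  show ?thesis
  proof (intro exI conjI allI)
    show "0 < min a1 a2" using 1 2 by simp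
    fix y :: 'a
    have "min a1 a2 * norm y \<le> a1 * norm y" "min a1 a2 * norm y \<le> a2 * norm y"
      by (simp_all add: mult_right_mono)
    then have "min a1 a2 * norm y - max b1 b2 \<le> a1 * norm y - b1" "min a1 a2 * norm y - max b1 b2 \<le> a2 * norm y - b2"
      by linarith+
    then show "ereal (min a1 a2 * norm y - max b1 b2) \<le> u y" "ereal (min a1 a2 * norm y - max b1 b2) \<le> v y"
      using 1(2)[of y] 2(2)[of y] by (meson ereal_less_eq(3) order_trans)+
  qed
qed

lemma abs_diff_le_max:
  fixes s t :: real assumes "0 \<le> s" "0 \<le> t" "s \<le> c" "t \<le> c" shows "\<bar>s - t\<bar> \<le> c"
  using assms by linarith

lemma integrable_pair:
  fixes u v :: "'a::euclidean_space \<Rightarrow> ereal"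
  assumes z: "\<zeta> \<in> M_class DIM('a) p" and p: "0 \<le> p" and u: "u \<in> Conv_coe" and v: "v \<in> Conv_coe"
  shows "integrable lebesgue (\<lambda>x. \<bar>zeta_ext \<zeta> (u x) - zeta_ext \<zeta> (v x)\<bar> powr p)"
proof -
  obtain a b where ab: "a > 0" "\<And>y. ereal (a * norm y - b) \<le> u y" "\<And>y. ereal (a * norm y - b) \<le> v y"
    using pair_bound[OF u v] by blast
  show ?thesis
  proof (rule Bochner_Integration.integrable_bound[OF radial_integrable[OF z p ab(1), of b]])
    show "(\<lambda>x. \<bar>zeta_ext \<zeta> (u x) - zeta_ext \<zeta> (v x)\<bar> powr p) \<in> borel_measurable lebesgue"
      by (rule integrand_meas[OF z Conv_coeD(3)[OF u] Conv_coeD(3)[OF v]])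
    show "AE x in lebesgue. norm (\<bar>zeta_ext \<zeta> (u x) - zeta_ext \<zeta> (v x)\<bar> powr p) \<le> norm (\<zeta> (a * norm x - b) powr p)"
    proof (intro AE_I2)
      fix x :: 'a
      have "\<bar>zeta_ext \<zeta> (u x) - zeta_ext \<zeta> (v x)\<bar> \<le> \<zeta> (a * norm x - b)"
        using ze_nonneg[OF z] ze_le[OF z ab(2)] ze_le[OF z ab(3)] by (intro abs_diff_le_max) auto
      then have "\<bar>zeta_ext \<zeta> (u x) - zeta_ext \<zeta> (v x)\<bar> powr p \<le> \<zeta> (a * norm x - b) powr p"
        using p by (intro powr_mono2) auto
      then show "norm (\<bar>zeta_ext \<zeta> (u x) - zeta_ext \<zeta> (v x)\<bar> powr p) \<le> norm (\<zeta> (a * norm x - b) powr p)"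
        by simp
    qed
  qed
qed

lemma delta_nonneg: "0 \<le> delta_zp \<zeta> p u v"
  unfolding delta_zp_def by simp

lemma delta_sym: "delta_zp \<zeta> p u v = delta_zp \<zeta> p v u"
  unfolding delta_zp_def by (simp add: abs_minus_commute)

lemma delta_self: "delta_zp \<zeta> p u u = 0"
  unfolding delta_zp_def by simp

lemma delta_triangle:
  fixes u v w :: "'a::euclidean_space \<Rightarrow> ereal"
  assumes z: "\<zeta> \<in> M_class DIM('a) p" and p: "1 \<le> p" and u: "u \<in> Conv_coe" and v: "v \<in> Conv_coe" and w: "w \<in> Conv_coe"
  shows "delta_zp \<zeta> p u w \<le> delta_zp \<zeta> p u v + delta_zp \<zeta> p v w"
  unfolding delta_zp_def
  by (rule minkowski[OF p]) (use integrable_pair[OF z _ u v] integrable_pair[OF z _ v w] integrable_pair[OF z _ u w] p in auto)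

lemma conv_comb:
  fixes f :: "'a::real_vector \<Rightarrow> ereal"
  assumes cf: "convex_fun f" and fx: "f x = ereal a" and fy: "f y = ereal b" and t: "0 \<le> t" "t \<le> 1"
  shows "f ((1 - t) *\<^sub>R x + t *\<^sub>R y) \<le> ereal ((1 - t) * a + t * b)"
proof -
  have "f ((1 - t) *\<^sub>R x + t *\<^sub>R y) \<le> ereal (1 - t) * f x + ereal t * f y"
    using cf t unfolding convex_fun_def by blast
  also have "\<dots> = ereal ((1 - t) * a + t * b)" using fx fy by simp
  finally show ?thesis .
qed

lemma fin_of_le:
  fixes w :: ereal assumes "w \<noteq> -\<infinity>" "w \<le> ereal c" obtains a where "w = ereal a" "a \<le> c"
  using assms by (cases w) auto

lemma sublevel_convex:
  fixes f :: "'a::real_vector \<Rightarrow> ereal"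
  assumes cf: "convex_fun f" and nm: "\<And>x. f x \<noteq> -\<infinity>"
  shows "convex {z. f z \<le> ereal c}"
  unfolding convex_alt
proof (intro ballI allI impI, elim conjE)
  fix x y and t :: real assume x: "x \<in> {z. f z \<le> ereal c}" and y: "y \<in> {z. f z \<le> ereal c}" and t: "0 \<le> t" "t \<le> 1"
  obtain a where a: "f x = ereal a" "a \<le> c" using x nm[of x] by (auto elim: fin_of_le)
  obtain b where b: "f y = ereal b" "b \<le> c" using y nm[of y] by (auto elim: fin_of_le)
  have "f ((1 - t) *\<^sub>R x + t *\<^sub>R y) \<le> ereal ((1 - t) * a + t * b)" by (rule conv_comb[OF cf a(1) b(1) t])
  also have "(1 - t) * a + t * b \<le> (1 - t) * c + t * c"
    using a b t by (intro add_mono mult_left_mono) auto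
  finally show "(1 - t) *\<^sub>R x + t *\<^sub>R y \<in> {z. f z \<le> ereal c}" by (simp add: algebra_simps)
qed

lemma dom_convex:
  fixes f :: "'a::real_vector \<Rightarrow> ereal"
  assumes cf: "convex_fun f" and nm: "\<And>x. f x \<noteq> -\<infinity>"
  shows "convex (dom_fun f)"
  unfolding convex_alt dom_fun_def
proof (intro ballI allI impI, elim conjE)
  fix x y and t :: real assume x: "x \<in> {z. f z < \<infinity>}" and y: "y \<in> {z. f z < \<infinity>}" and t: "0 \<le> t" "t \<le> 1"
  obtain a where a: "f x = ereal a" using x nm[of x] by (cases "f x") auto
  obtain b where b: "f y = ereal b" using y nm[of y] by (cases "f y") auto
  have "f ((1 - t) *\<^sub>R x + t *\<^sub>R y) \<le> ereal ((1 - t) * a + t * b)" by (rule conv_comb[OF cf a b t])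
  also have "\<dots> < \<infinity>" by simp
  finally show "(1 - t) *\<^sub>R x + t *\<^sub>R y \<in> {z. f z < \<infinity>}" by simp
qed

lemma convex_on_interior_dom:
  fixes f :: "'a::euclidean_space \<Rightarrow> ereal"
  assumes cf: "convex_fun f" and nm: "\<And>x. f x \<noteq> -\<infinity>"
  shows "convex_on (interior (dom_fun f)) (\<lambda>x. real_of_ereal (f x))"
proof (rule convex_onI)
  show "convex (interior (dom_fun f))" by (rule convex_interior[OF dom_convex[OF cf nm]])
  fix t :: real and x y assume t: "0 < t" "t < 1" and x: "x \<in> interior (dom_fun f)" and y: "y \<in> interior (dom_fun f)"
  have "x \<in> dom_fun f" "y \<in> dom_fun f" using x y interior_subset by auto
  then obtain a b where a: "f x = ereal a" and b: "f y = ereal b"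
    using nm[of x] nm[of y] unfolding dom_fun_def by (cases "f x"; cases "f y") auto
  have le: "f ((1 - t) *\<^sub>R x + t *\<^sub>R y) \<le> ereal ((1 - t) * a + t * b)" by (rule conv_comb[OF cf a b]) (use t in auto)
  then obtain c where c: "f ((1 - t) *\<^sub>R x + t *\<^sub>R y) = ereal c" "c \<le> (1 - t) * a + t * b"
    using nm by (auto elim: fin_of_le)
  show "real_of_ereal (f ((1 - t) *\<^sub>R x + t *\<^sub>R y)) \<le> (1 - t) * real_of_ereal (f x) + t * real_of_ereal (f y)"
    using a b c by simp
qed

lemma upper_near_interior:
  fixes f :: "'a::euclidean_space \<Rightarrow> ereal"
  assumes cf: "convex_fun f" and nm: "\<And>x. f x \<noteq> -\<infinity>" and x: "x \<in> interior (dom_fun f)" and e: "0 < e"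
  shows "\<exists>\<rho>>0. ball x \<rho> \<subseteq> interior (dom_fun f) \<and> (\<forall>y\<in>ball x \<rho>. f y < ereal (real_of_ereal (f x) + e))"
proof -
  have co: "continuous_on (interior (dom_fun f)) (\<lambda>x. real_of_ereal (f x))"
    by (rule convex_on_continuous[OF open_interior convex_on_interior_dom[OF cf nm]])
  obtain d where d: "d > 0" "\<And>y. y \<in> interior (dom_fun f) \<Longrightarrow> dist y x < d \<Longrightarrow> dist (real_of_ereal (f y)) (real_of_ereal (f x)) < e"
    using co x e unfolding continuous_on_iff by metis
  obtain r0 where r0: "r0 > 0" "ball x r0 \<subseteq> interior (dom_fun f)"
    using x open_interior open_contains_ball by blast
  show ?thesis
  proof (intro exI conjI ballI)
    show "0 < min d r0" using d r0 by simp
    show "ball x (min d r0) \<subseteq> interior (dom_fun f)" using r0 by auto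
    fix y assume y: "y \<in> ball x (min d r0)"
    then have yi: "y \<in> interior (dom_fun f)" using r0 by auto
    then have "y \<in> dom_fun f" using interior_subset by auto
    then obtain c where c: "f y = ereal c" using nm[of y] unfolding dom_fun_def by (cases "f y") auto
    have "dist (real_of_ereal (f y)) (real_of_ereal (f x)) < e" using d(2)[OF yi] y by (simp add: dist_commute)
    then show "f y < ereal (real_of_ereal (f x) + e)" using c by (simp add: dist_real_def)
  qed
qed

lemma interior_limsup:
  fixes uk :: "nat \<Rightarrow> 'a::euclidean_space \<Rightarrow> ereal"
  assumes uk: "\<And>k. uk k \<in> Conv_coe" and u: "u \<in> Conv_coe" and epi: "epi_converges uk u"
    and x: "x \<in> interior (dom_fun u)" and e: "0 < e"
  shows "eventually (\<lambda>k. uk k x \<le> ereal (real_of_ereal (u x) + e)) sequentially"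
proof -
  define v where "v = real_of_ereal (u x)"
  obtain \<rho> where \<rho>: "\<rho> > 0" "\<And>y. y \<in> ball x \<rho> \<Longrightarrow> u y < ereal (v + e / 2)"
    using upper_near_interior[OF Conv_coeD(5)[OF u] Conv_coeD(1)[OF u] x, of "e / 2"] e
    unfolding v_def by auto
  define D where "D = real DIM('a)"
  define r where "r = \<rho> / (2 * (D + 1))"
  have D0: "0 \<le> D" by (simp add: D_def)
  have r0: "0 < r" using \<rho> D0 by (simp add: r_def)
  have rD: "r * D < \<rho> / 2" using \<rho> D0 by (simp add: r_def field_simps)
  define \<Sigma> where "\<Sigma> = Pi\<^sub>E (Basis::'a set) (\<lambda>_. {-1::real, 1})"
  have fin: "finite \<Sigma>" unfolding \<Sigma>_def by (intro finite_PiE) auto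
  define ys where "ys \<sigma> = x + r *\<^sub>R (\<Sum>i\<in>Basis. \<sigma> i *\<^sub>R i)" for \<sigma> :: "'a \<Rightarrow> real"
  have ys_near: "dist (ys \<sigma>) x < \<rho> / 2" if "\<sigma> \<in> \<Sigma>" for \<sigma>
  proof -
    have "norm (\<Sum>i\<in>Basis. \<sigma> i *\<^sub>R i) \<le> (\<Sum>i\<in>(Basis::'a set). norm (\<sigma> i *\<^sub>R i))" by (rule norm_sum)
    also have "\<dots> = (\<Sum>i\<in>(Basis::'a set). 1)"
      using that unfolding \<Sigma>_def by (intro sum.cong) (auto simp: PiE_iff)
    also have "\<dots> = D" by (simp add: D_def)
    finally have "norm (\<Sum>i\<in>Basis. \<sigma> i *\<^sub>R i) \<le> D" .
    then have "r * norm (\<Sum>i\<in>Basis. \<sigma> i *\<^sub>R i) \<le> r * D" using r0 by (intro mult_left_mono) auto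
    moreover have "dist (ys \<sigma>) x = r * norm (\<Sum>i\<in>Basis. \<sigma> i *\<^sub>R i)"
      using r0 by (simp add: ys_def dist_norm)
    ultimately show ?thesis using rD by linarith
  qed
  have ys_comp: "inner (ys \<sigma> - x) i = r * \<sigma> i" if "i \<in> Basis" for \<sigma> i
  proof -
    have "inner (ys \<sigma> - x) i = r * (\<Sum>j\<in>Basis. \<sigma> j * inner j i)"
      by (simp add: ys_def inner_sum_left)
    also have "(\<Sum>j\<in>Basis. \<sigma> j * inner j i) = (\<Sum>j\<in>Basis. if j = i then \<sigma> j else 0)"
      using that by (intro sum.cong) (auto simp: inner_Basis)
    also have "\<dots> = \<sigma> i" using that by simp
    finally show ?thesis .
  qed
  have "\<forall>\<sigma>\<in>\<Sigma>. \<exists>Y. Y \<longlonglongrightarrow> ys \<sigma> \<and> limsup (\<lambda>k. uk k (Y k)) \<le> u (ys \<sigma>)"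
    using epi unfolding epi_converges_def by blast
  then obtain Y where Y: "\<And>\<sigma>. \<sigma> \<in> \<Sigma> \<Longrightarrow> Y \<sigma> \<longlonglongrightarrow> ys \<sigma>" "\<And>\<sigma>. \<sigma> \<in> \<Sigma> \<Longrightarrow> limsup (\<lambda>k. uk k (Y \<sigma> k)) \<le> u (ys \<sigma>)"
    by metis
  have ev: "\<forall>\<sigma>\<in>\<Sigma>. eventually (\<lambda>k. uk k (Y \<sigma> k) < ereal (v + e) \<and> dist (Y \<sigma> k) (ys \<sigma>) < r) sequentially"
  proof
    fix \<sigma> assume s: "\<sigma> \<in> \<Sigma>"
    have "ys \<sigma> \<in> ball x \<rho>" using ys_near[OF s] \<rho>(1) zero_le_dist[of "ys \<sigma>" x] by (simp add: dist_commute)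
    then have "u (ys \<sigma>) < ereal (v + e / 2)" by (rule \<rho>(2))
    also have "\<dots> < ereal (v + e)" using e by simp
    finally have "limsup (\<lambda>k. uk k (Y \<sigma> k)) < ereal (v + e)" using Y(2)[OF s] by (rule le_less_trans[rotated])
    then have 1: "eventually (\<lambda>k. uk k (Y \<sigma> k) < ereal (v + e)) sequentially" by (rule Limsup_lessD)
    have 2: "eventually (\<lambda>k. dist (Y \<sigma> k) (ys \<sigma>) < r) sequentially" using Y(1)[OF s] r0 by (rule tendstoD)
    show "eventually (\<lambda>k. uk k (Y \<sigma> k) < ereal (v + e) \<and> dist (Y \<sigma> k) (ys \<sigma>) < r) sequentially"
      using 1 2 by (rule eventually_conj)
  qed
  have "eventually (\<lambda>k. \<forall>\<sigma>\<in>\<Sigma>. uk k (Y \<sigma> k) < ereal (v + e) \<and> dist (Y \<sigma> k) (ys \<sigma>) < r) sequentially"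
    using fin ev by (rule eventually_ball_finite)
  then show ?thesis
  proof eventually_elim
    case (elim k)
    define L where "L = {z. uk k z \<le> ereal (v + e)}"
    show "uk k x \<le> ereal (real_of_ereal (u x) + e)"
    proof (rule ccontr)
      assume "\<not> ?thesis"
      then have xL: "x \<notin> L" by (simp add: L_def v_def)
      have cL: "convex L" unfolding L_def by (rule sublevel_convex[OF Conv_coeD(5)[OF uk] Conv_coeD(1)[OF uk]])
      have clL: "closed L" unfolding L_def by (rule lsc_closed_sublevel[OF Conv_coeD(3)[OF uk]])
      obtain a \<beta> where ab: "inner a x < \<beta>" "\<And>z. z \<in> L \<Longrightarrow> \<beta> < inner a z"
        using separating_hyperplane_closed_point[OF cL clL xL] by blast
      define \<sigma>0 where "\<sigma>0 = restrict (\<lambda>i. if 0 < inner a i then -1 else (1::real)) Basis"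
      have s0: "\<sigma>0 \<in> \<Sigma>" unfolding \<sigma>0_def \<Sigma>_def by (simp add: restrict_PiE_iff)
      define Z where "Z = Y \<sigma>0 k"
      have ZL: "Z \<in> L" using elim s0 by (auto simp: L_def Z_def less_imp_le)
      have Zd: "dist Z (ys \<sigma>0) < r" using elim s0 by (auto simp: Z_def)
      have "0 < inner a (Z - x)" using ab(1) ab(2)[OF ZL] by (simp add: inner_diff_right)
      also have "inner a (Z - x) = (\<Sum>i\<in>Basis. inner a i * inner (Z - x) i)" by (rule euclidean_inner)
      also have "\<dots> \<le> 0"
      proof (rule sum_nonpos)
        fix i :: 'a assume i: "i \<in> Basis"
        have "inner (Z - x) i = inner (ys \<sigma>0 - x) i + inner (Z - ys \<sigma>0) i" by (simp add: inner_diff_left)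
        also have "inner (ys \<sigma>0 - x) i = r * \<sigma>0 i" by (rule ys_comp[OF i])
        finally have comp: "inner (Z - x) i = r * \<sigma>0 i + inner (Z - ys \<sigma>0) i" .
        have "\<bar>inner (Z - ys \<sigma>0) i\<bar> \<le> norm (Z - ys \<sigma>0)" by (rule Basis_le_norm[OF i])
        also have "\<dots> < r" using Zd by (simp add: dist_norm)
        finally have sm: "\<bar>inner (Z - ys \<sigma>0) i\<bar> < r" .
        show "inner a i * inner (Z - x) i \<le> 0"
        proof (cases "0 < inner a i")
          case True
          then have "\<sigma>0 i = -1" using i by (simp add: \<sigma>0_def)
          then have "inner (Z - x) i < 0" using comp sm by (simp add: abs_less_iff)
          then show ?thesis using True by (simp add: mult_pos_neg less_imp_le)
        next
          case False
          then have "\<sigma>0 i = 1" using i by (simp add: \<sigma>0_def)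
          then have "0 < inner (Z - x) i" using comp sm by (simp add: abs_less_iff)
          then show ?thesis using False by (simp add: mult_nonpos_nonneg)
        qed
      qed
      finally show False by simp
    qed
  qed
qed

lemma ptwise_interior:
  fixes uk :: "nat \<Rightarrow> 'a::euclidean_space \<Rightarrow> ereal"
  assumes uk: "\<And>k. uk k \<in> Conv_coe" and u: "u \<in> Conv_coe" and epi: "epi_converges uk u"
    and x: "x \<in> interior (dom_fun u)"
  shows "(\<lambda>k. uk k x) \<longlonglongrightarrow> u x"
proof -
  have "x \<in> dom_fun u" using x interior_subset by auto
  then obtain v where v: "u x = ereal v" using Conv_coeD(1)[OF u, of x] unfolding dom_fun_def by (cases "u x") auto
  have li: "u x \<le> liminf (\<lambda>k. uk k x)"
    using epi unfolding epi_converges_def by (auto dest!: spec[of _ x] spec[of _ "\<lambda>k. x"])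
  show ?thesis
  proof (rule order_tendstoI)
    fix a assume "a < u x"
    then have "a < liminf (\<lambda>k. uk k x)" using li by (rule less_le_trans)
    then show "eventually (\<lambda>k. a < uk k x) sequentially" by (rule less_LiminfD)
  next
    fix a assume a: "u x < a"
    show "eventually (\<lambda>k. uk k x < a) sequentially"
    proof (cases a)
      case PInf
      have "eventually (\<lambda>k. uk k x \<le> ereal (real_of_ereal (u x) + 1)) sequentially"
        by (rule interior_limsup[OF uk u epi x]) simp
      then show ?thesis
      proof eventually_elim
        case (elim k)
        have "ereal (real_of_ereal (u x) + 1) < \<infinity>" by simp
        note lt = this
        have "uk k x < \<infinity>" using le_less_trans[OF elim lt] .
        then show ?case using PInf by simp
      qed
    next
      case (real c)
      then have cv: "v < c" using a v by simp
      have "eventually (\<lambda>k. uk k x \<le> ereal (real_of_ereal (u x) + (c - v) / 2)) sequentially"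
        by (rule interior_limsup[OF uk u epi x]) (use cv in simp)
      then show ?thesis
      proof eventually_elim
        case (elim k)
        have "ereal (real_of_ereal (u x) + (c - v) / 2) < ereal c" using v cv by (simp add: field_simps)
        then show ?case using elim real by (simp add: le_less_trans)
      qed
    next
      case MInf then show ?thesis using a by simp
    qed
  qed
qed

lemma ptwise_exterior:
  fixes uk :: "nat \<Rightarrow> 'a::euclidean_space \<Rightarrow> ereal"
  assumes epi: "epi_converges uk u" and x: "x \<notin> closure (dom_fun u)"
  shows "(\<lambda>k. uk k x) \<longlonglongrightarrow> \<infinity>" "u x = \<infinity>"
proof -
  have "x \<notin> dom_fun u" using x closure_subset by auto
  then show ux: "u x = \<infinity>" unfolding dom_fun_def by simp
  have li: "u x \<le> liminf (\<lambda>k. uk k x)"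
    using epi unfolding epi_converges_def by (auto dest!: spec[of _ x] spec[of _ "\<lambda>k. x"])
  show "(\<lambda>k. uk k x) \<longlonglongrightarrow> \<infinity>"
  proof (rule order_tendstoI)
    fix a :: ereal assume "a < \<infinity>"
    then have "a < liminf (\<lambda>k. uk k x)" using li ux by simp
    then show "eventually (\<lambda>k. a < uk k x) sequentially" by (rule less_LiminfD)
  qed simp
qed

lemma ae_conv:
  fixes uk :: "nat \<Rightarrow> 'a::euclidean_space \<Rightarrow> ereal"
  assumes uk: "\<And>k. uk k \<in> Conv_coe" and u: "u \<in> Conv_coe" and epi: "epi_converges uk u"
    and z: "\<zeta> \<in> M_class DIM('a) p" and p: "0 < p"
  shows "AE x in lebesgue. (\<lambda>k. \<bar>zeta_ext \<zeta> (uk k x) - zeta_ext \<zeta> (u x)\<bar> powr p) \<longlonglongrightarrow> 0"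
proof (rule AE_I')
  show "frontier (dom_fun u) \<in> null_sets lebesgue"
    using negligible_convex_frontier[OF dom_convex[OF Conv_coeD(5)[OF u] Conv_coeD(1)[OF u]]]
    by (simp add: negligible_iff_null_sets)
  show "{x \<in> space lebesgue. \<not> (\<lambda>k. \<bar>zeta_ext \<zeta> (uk k x) - zeta_ext \<zeta> (u x)\<bar> powr p) \<longlonglongrightarrow> 0} \<subseteq> frontier (dom_fun u)"
  proof (intro subsetI, elim CollectE conjE)
    fix x assume nc: "\<not> (\<lambda>k. \<bar>zeta_ext \<zeta> (uk k x) - zeta_ext \<zeta> (u x)\<bar> powr p) \<longlonglongrightarrow> 0"
    have zc: "(\<lambda>k. zeta_ext \<zeta> (uk k x)) \<longlonglongrightarrow> zeta_ext \<zeta> (u x)" if "x \<notin> frontier (dom_fun u)"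
    proof (cases "x \<in> interior (dom_fun u)")
      case True
      have "x \<in> dom_fun u" using True interior_subset by auto
      then obtain v where v: "u x = ereal v" using Conv_coeD(1)[OF u, of x] unfolding dom_fun_def by (cases "u x") auto
      have "(\<lambda>k. uk k x) \<longlonglongrightarrow> ereal v" using ptwise_interior[OF uk u epi True] v by simp
      then have "(\<lambda>k. zeta_ext \<zeta> (uk k x)) \<longlonglongrightarrow> \<zeta> v" by (rule ze_tendsto_fin[OF z])
      then show ?thesis using v by (simp add: zeta_ext_def)
    next
      case False
      then have "x \<notin> closure (dom_fun u)" using that by (simp add: frontier_def)
      from ptwise_exterior[OF epi this] show ?thesis
        using ze_tendsto_inf[OF z less_imp_le[OF p]] by (simp add: zeta_ext_def)
    qed
    show "x \<in> frontier (dom_fun u)"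
    proof (rule ccontr)
      assume "x \<notin> frontier (dom_fun u)"
      then have "(\<lambda>k. zeta_ext \<zeta> (uk k x) - zeta_ext \<zeta> (u x)) \<longlonglongrightarrow> 0"
        using zc by (simp add: LIM_zero)
      then have "(\<lambda>k. \<bar>zeta_ext \<zeta> (uk k x) - zeta_ext \<zeta> (u x)\<bar>) \<longlonglongrightarrow> 0" by (rule tendsto_rabs_zero)
      then have "(\<lambda>k. \<bar>zeta_ext \<zeta> (uk k x) - zeta_ext \<zeta> (u x)\<bar> powr p) \<longlonglongrightarrow> 0"
        by (rule tendsto_zero_powrI) (use p in auto)
      then show False using nc by simp
    qed
  qed
qed

lemma forward_dir:
  fixes uk :: "nat \<Rightarrow> 'a::euclidean_space \<Rightarrow> ereal"
  assumes uk: "\<And>k. uk k \<in> Conv_coe" and u: "u \<in> Conv_coe" and epi: "epi_converges uk u"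
    and z: "\<zeta> \<in> M_class DIM('a) p" and p: "1 \<le> p"
  shows "(\<lambda>k. delta_zp \<zeta> p (uk k) u) \<longlonglongrightarrow> 0"
proof -
  obtain a1 b1 and K :: nat where 1: "a1 > 0" "\<And>k y. K \<le> k \<Longrightarrow> ereal (a1 * norm y - b1) \<le> uk k y"
    using unif_coercive[OF uk u epi] by blast
  obtain a2 b2 where 2: "a2 > 0" "\<And>y. ereal (a2 * norm y - b2) \<le> u y" using single_bound[OF u] by blast
  define a where "a = min a1 a2"
  define b where "b = max b1 b2"
  have a0: "a > 0" using 1 2 by (simp add: a_def)
  have lb1: "ereal (a * norm y - b) \<le> uk k y" if "K \<le> k" for k y
  proof -
    have "a * norm y \<le> a1 * norm y" by (simp add: a_def mult_right_mono)
    then have "a * norm y - b \<le> a1 * norm y - b1" by (simp add: b_def)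
    then show ?thesis using 1(2)[OF that, of y] by (meson ereal_less_eq(3) order_trans)
  qed
  have lb2: "ereal (a * norm y - b) \<le> u y" for y
  proof -
    have "a * norm y \<le> a2 * norm y" by (simp add: a_def mult_right_mono)
    then have "a * norm y - b \<le> a2 * norm y - b2" by (simp add: b_def)
    then show ?thesis using 2(2)[of y] by (meson ereal_less_eq(3) order_trans)
  qed
  define s where "s k x = \<bar>zeta_ext \<zeta> (uk (k + K) x) - zeta_ext \<zeta> (u x)\<bar> powr p" for k x
  define w where "w x = \<zeta> (a * norm x - b) powr p" for x :: 'a
  have p0: "0 \<le> p" "0 < p" using p by auto
  define f0 :: "'a \<Rightarrow> real" where "f0 = (\<lambda>x. 0)"
  have "(\<lambda>k. integral\<^sup>L lebesgue (s k)) \<longlonglongrightarrow> integral\<^sup>L lebesgue f0"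
  proof (rule integral_dominated_convergence[where w=w])
    show "f0 \<in> borel_measurable lebesgue" by (simp add: f0_def)
    show "s k \<in> borel_measurable lebesgue" for k
      unfolding s_def by (rule integrand_meas[OF z Conv_coeD(3)[OF uk] Conv_coeD(3)[OF u]])
    show "integrable lebesgue w" unfolding w_def by (rule radial_integrable[OF z p0(1) a0])
    have "AE x in lebesgue. (\<lambda>k. \<bar>zeta_ext \<zeta> (uk k x) - zeta_ext \<zeta> (u x)\<bar> powr p) \<longlonglongrightarrow> 0"
      by (rule ae_conv[OF uk u epi z p0(2)])
    then show "AE x in lebesgue. (\<lambda>k. s k x) \<longlonglongrightarrow> f0 x"
      by eventually_elim (unfold s_def f0_def, rule LIMSEQ_ignore_initial_segment)
    show "AE x in lebesgue. norm (s k x) \<le> w x" for k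
    proof (intro AE_I2)
      fix x :: 'a
      have "\<bar>zeta_ext \<zeta> (uk (k + K) x) - zeta_ext \<zeta> (u x)\<bar> \<le> \<zeta> (a * norm x - b)"
        using ze_nonneg[OF z] ze_le[OF z lb1[of "k + K" x]] ze_le[OF z lb2[of x]] by (intro abs_diff_le_max) auto
      then have "s k x \<le> w x" unfolding s_def w_def using p0 by (intro powr_mono2) auto
      then show "norm (s k x) \<le> w x" by (simp add: s_def)
    qed
  qed
  then have "(\<lambda>k. integral\<^sup>L lebesgue (\<lambda>x. \<bar>zeta_ext \<zeta> (uk (k + K) x) - zeta_ext \<zeta> (u x)\<bar> powr p)) \<longlonglongrightarrow> 0"
    by (simp add: s_def[abs_def] f0_def)
  then have I0: "(\<lambda>k. integral\<^sup>L lebesgue (\<lambda>x. \<bar>zeta_ext \<zeta> (uk k x) - zeta_ext \<zeta> (u x)\<bar> powr p)) \<longlonglongrightarrow> 0"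
    by (rule LIMSEQ_offset)
  have "(\<lambda>k. (integral\<^sup>L lebesgue (\<lambda>x. \<bar>zeta_ext \<zeta> (uk k x) - zeta_ext \<zeta> (u x)\<bar> powr p)) powr (1 / p)) \<longlonglongrightarrow> 0"
    by (rule tendsto_zero_powrI[OF I0 tendsto_const]) (use p in auto)
  then show ?thesis unfolding delta_zp_def .
qed

lemma int_lower:
  fixes f :: "'a::euclidean_space \<Rightarrow> real"
  assumes fi: "integrable lebesgue f" and f0: "\<And>x. 0 \<le> f x" and A: "A \<in> sets lebesgue"
    and Afin: "emeasure lebesgue A < \<infinity>" and bd: "\<And>x. x \<in> A \<Longrightarrow> \<eta> \<le> f x" and eta: "0 \<le> \<eta>"
  shows "\<eta> * measure lebesgue A \<le> integral\<^sup>L lebesgue f"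
proof -
  have ii: "integrable lebesgue (\<lambda>x. \<eta> * indicator A x)"
    using A Afin by (intro integrable_mult_right integrable_real_indicator) auto
  have "\<eta> * measure lebesgue A = integral\<^sup>L lebesgue (\<lambda>x. \<eta> * indicator A x)" by simp
  also have "\<dots> \<le> integral\<^sup>L lebesgue f"
  proof (rule integral_mono[OF ii fi])
    fix x show "\<eta> * indicator A x \<le> f x"
      using bd[of x] f0[of x] eta by (cases "x \<in> A") auto
  qed
  finally show ?thesis .
qed

lemma ball_meas:
  fixes c :: "'a::euclidean_space"
  shows "ball c r \<in> sets lebesgue" "emeasure lebesgue (ball c r) < \<infinity>"
    "r > 0 \<Longrightarrow> 0 < measure lebesgue (ball c r)"
proof -
  show "ball c r \<in> sets lebesgue" by simp
  show "emeasure lebesgue (ball c r) < \<infinity>" using emeasure_lborel_ball_finite[of c r] by simp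
  assume "r > 0"
  then show "0 < measure lebesgue (ball c r)" using content_ball_pos[of r c] by simp
qed

lemma I_tendsto:
  assumes "(\<lambda>k. delta_zp \<zeta> p (uk k) u) \<longlonglongrightarrow> 0" and p: "1 \<le> p"
  shows "(\<lambda>k. integral\<^sup>L lebesgue (\<lambda>x. \<bar>zeta_ext \<zeta> (uk k x) - zeta_ext \<zeta> (u x)\<bar> powr p)) \<longlonglongrightarrow> 0"
proof -
  define I where "I k = integral\<^sup>L lebesgue (\<lambda>x. \<bar>zeta_ext \<zeta> (uk k x) - zeta_ext \<zeta> (u x)\<bar> powr p)" for k
  have I0: "0 \<le> I k" for k unfolding I_def by (intro integral_nonneg_AE) auto
  have "I k = (delta_zp \<zeta> p (uk k) u) powr p" for k
    using I0[of k] p unfolding delta_zp_def I_def[symmetric] by (simp add: powr_powr powr_one)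
  moreover have "(\<lambda>k. (delta_zp \<zeta> p (uk k) u) powr p) \<longlonglongrightarrow> 0"
    by (rule tendsto_zero_powrI[OF assms(1) tendsto_const]) (use p in \<open>auto simp: delta_zp_def\<close>)
  ultimately show ?thesis unfolding I_def by simp
qed

lemma near_interior_point:
  fixes u :: "'a::euclidean_space \<Rightarrow> ereal"
  assumes u: "u \<in> Conv_coe" and v: "u x = ereal v" and e: "0 < e"
  shows "\<exists>x1\<in>interior (dom_fun u). dist x1 x < e \<and> u x1 < ereal (v + e)"
proof -
  have cd: "convex (dom_fun u)" by (rule dom_convex[OF Conv_coeD(5)[OF u] Conv_coeD(1)[OF u]])
  have xd: "x \<in> dom_fun u" using v by (simp add: dom_fun_def)
  have "interior (dom_fun u) = rel_interior (dom_fun u)"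
    using Conv_coeD(6)[OF u] by (simp add: interior_rel_interior_gen)
  also have "\<dots> \<noteq> {}" using rel_interior_eq_empty[OF cd] xd by auto
  finally obtain x0 where x0: "x0 \<in> interior (dom_fun u)" by auto
  show ?thesis
  proof (cases "x \<in> interior (dom_fun u)")
    case True then show ?thesis using v e by (intro bexI[of _ x]) auto
  next
    case False
    then have ne: "x0 \<noteq> x" using x0 by auto
    have "x0 \<in> dom_fun u" using x0 interior_subset by auto
    then obtain v0 where v0: "u x0 = ereal v0" using Conv_coeD(1)[OF u, of x0] unfolding dom_fun_def by (cases "u x0") auto
    define d where "d = \<bar>v0 - v\<bar> + norm (x0 - x) + 1"
    have d0: "0 < d" unfolding d_def by (simp add: add_nonneg_pos)
    define s where "s = min (1/2) (e / (2 * d))"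
    have s0: "0 < s" "s < 1" using e d0 by (auto simp: s_def)
    have sd: "s * d \<le> e / 2"
    proof -
      have "s * d \<le> e / (2 * d) * d" using d0 by (intro mult_right_mono) (auto simp: s_def)
      also have "\<dots> = e / 2" using d0 by simp
      finally show ?thesis .
    qed
    define x1 where "x1 = (1 - s) *\<^sub>R x + s *\<^sub>R x0"
    have "x1 \<in> open_segment x0 x"
      unfolding in_segment using ne s0 by (intro conjI exI[of _ "1 - s"]) (auto simp: x1_def algebra_simps)
    moreover have "open_segment x0 x \<subseteq> interior (dom_fun u)"
      using in_interior_closure_convex_segment[OF cd x0] xd closure_subset by auto
    ultimately have x1i: "x1 \<in> interior (dom_fun u)" by auto
    have "dist x1 x = s * norm (x0 - x)"
      using s0 by (simp add: x1_def dist_norm algebra_simps flip: scaleR_diff_right)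
    also have "\<dots> \<le> s * d" using s0 by (intro mult_left_mono) (auto simp: d_def add_nonneg_nonneg)
    finally have dx: "dist x1 x < e" using sd e by linarith
    have c1: "u x1 \<le> ereal ((1 - s) * v + s * v0)"
      unfolding x1_def by (rule conv_comb[OF Conv_coeD(5)[OF u] v v0]) (use s0 in auto)
    have "v0 - v \<le> d" unfolding d_def using abs_ge_self[of "v0 - v"] norm_ge_zero[of "x0 - x"] by linarith
    then have "s * (v0 - v) \<le> s * d" using s0 by (intro mult_left_mono) auto
    then have c2: "(1 - s) * v + s * v0 < v + e" using sd e by (simp add: algebra_simps)
    have "u x1 < ereal (v + e)" using c1 c2 by (simp add: le_less_trans)
    then show ?thesis using x1i dx by blast
  qed
qed

lemma limsup_claim:
  fixes uk :: "nat \<Rightarrow> 'a::euclidean_space \<Rightarrow> ereal"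
  assumes uk: "\<And>k. uk k \<in> Conv_coe" and u: "u \<in> Conv_coe"
    and z: "\<zeta> \<in> M_class DIM('a) p" and p: "1 \<le> p"
    and I: "(\<lambda>k. integral\<^sup>L lebesgue (\<lambda>x. \<bar>zeta_ext \<zeta> (uk k x) - zeta_ext \<zeta> (u x)\<bar> powr p)) \<longlonglongrightarrow> 0"
    and v: "u x = ereal v" and e: "0 < e"
  shows "eventually (\<lambda>k. \<exists>y\<in>ball x e. uk k y \<le> ereal (v + e)) sequentially"
proof -
  obtain x1 where x1: "x1 \<in> interior (dom_fun u)" "dist x1 x < e / 2" "u x1 < ereal (v + e / 2)"
    using near_interior_point[OF u v, of "e / 2"] e by auto
  have "x1 \<in> dom_fun u" using x1(1) interior_subset by auto
  then obtain v1 where v1: "u x1 = ereal v1" using Conv_coeD(1)[OF u, of x1] unfolding dom_fun_def by (cases "u x1") auto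
  have v1l: "v1 < v + e / 2" using x1(3) v1 by simp
  obtain \<rho> where \<rho>: "\<rho> > 0" "\<And>y. y \<in> ball x1 \<rho> \<Longrightarrow> u y < ereal (v1 + (v + 3 * e / 4 - v1))"
    using upper_near_interior[OF Conv_coeD(5)[OF u] Conv_coeD(1)[OF u] x1(1), of "v + 3 * e / 4 - v1"] v1l e v1
    by auto
  define \<rho>' where "\<rho>' = min \<rho> (e / 2)"
  have \<rho>'0: "0 < \<rho>'" using \<rho> e by (simp add: \<rho>'_def)
  have sub: "ball x1 \<rho>' \<subseteq> ball x e"
  proof
    fix y assume "y \<in> ball x1 \<rho>'"
    then have "dist x1 y < e / 2" by (simp add: \<rho>'_def)
    then show "y \<in> ball x e" using x1(2) dist_triangle[of x y x1] by (simp add: dist_commute)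
  qed
  have uy: "u y \<le> ereal (v + 3 * e / 4)" if "y \<in> ball x1 \<rho>'" for y
    using \<rho>(2)[of y] that by (simp add: \<rho>'_def less_imp_le)
  define \<eta> where "\<eta> = \<zeta> (v + 3 * e / 4) - \<zeta> (v + e)"
  have \<eta>0: "0 < \<eta>" unfolding \<eta>_def using M_classD(2)[OF z, of "v + 3 * e / 4" "v + e"] e by simp
  define mb where "mb = measure lebesgue (ball x1 \<rho>')"
  have mb0: "0 < mb" unfolding mb_def using ball_meas(3)[OF \<rho>'0] .
  have "0 < \<eta> powr p * mb" using \<eta>0 mb0 by simp
  then have "eventually (\<lambda>k. integral\<^sup>L lebesgue (\<lambda>x. \<bar>zeta_ext \<zeta> (uk k x) - zeta_ext \<zeta> (u x)\<bar> powr p) < \<eta> powr p * mb) sequentially"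
    using order_tendstoD(2)[OF I] by blast
  then show ?thesis
  proof eventually_elim
    case (elim k)
    show ?case
    proof (rule ccontr)
      assume "\<not> ?case"
      then have big: "ereal (v + e) < uk k y" if "y \<in> ball x1 \<rho>'" for y using sub that by (auto simp: not_le)
      have "\<eta> powr p * mb \<le> integral\<^sup>L lebesgue (\<lambda>x. \<bar>zeta_ext \<zeta> (uk k x) - zeta_ext \<zeta> (u x)\<bar> powr p)"
        unfolding mb_def
      proof (rule int_lower)
        show "integrable lebesgue (\<lambda>x. \<bar>zeta_ext \<zeta> (uk k x) - zeta_ext \<zeta> (u x)\<bar> powr p)"
          using integrable_pair[OF z _ uk u] p by simp
        fix y assume y: "y \<in> ball x1 \<rho>'"
        have "\<zeta> (v + 3 * e / 4) \<le> zeta_ext \<zeta> (u y)" by (rule ze_ge[OF z Conv_coeD(1)[OF u] uy[OF y]])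
        moreover have "zeta_ext \<zeta> (uk k y) \<le> \<zeta> (v + e)" using big[OF y] by (intro ze_le[OF z]) simp
        ultimately have "\<eta> \<le> \<bar>zeta_ext \<zeta> (uk k y) - zeta_ext \<zeta> (u y)\<bar>" unfolding \<eta>_def by linarith
        then show "\<eta> powr p \<le> \<bar>zeta_ext \<zeta> (uk k y) - zeta_ext \<zeta> (u y)\<bar> powr p"
          using \<eta>0 p by (intro powr_mono2) auto
      qed (use ball_meas in auto)
      then show False using elim by simp
    qed
  qed
qed

lemma diag:
  fixes f :: "nat \<Rightarrow> 'a::metric_space \<Rightarrow> ereal"
  assumes H: "\<And>m. eventually (\<lambda>k. \<exists>y. dist y x < 1 / real (Suc m) \<and> f k y \<le> ereal (c + 1 / real (Suc m))) sequentially"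
  shows "\<exists>X. X \<longlonglongrightarrow> x \<and> limsup (\<lambda>k. f k (X k)) \<le> ereal c"
proof -
  define P where "P m k \<longleftrightarrow> (\<exists>y. dist y x < 1 / real (Suc m) \<and> f k y \<le> ereal (c + 1 / real (Suc m)))" for m k
  have "\<forall>m. \<exists>N. \<forall>k\<ge>N. P m k" using H unfolding P_def eventually_sequentially by blast
  then obtain N where N: "\<And>m k. N m \<le> k \<Longrightarrow> P m k" by metis
  have "\<forall>m k. \<exists>y. P m k \<longrightarrow> dist y x < 1 / real (Suc m) \<and> f k y \<le> ereal (c + 1 / real (Suc m))"
    unfolding P_def by blast
  then obtain Y where Y: "\<And>m k. P m k \<Longrightarrow> dist (Y m k) x < 1 / real (Suc m) \<and> f k (Y m k) \<le> ereal (c + 1 / real (Suc m))"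
    by metis
  define S where "S k = {m. m \<le> k \<and> (\<forall>j\<le>m. N j \<le> k)}" for k
  have finS: "finite (S k)" for k unfolding S_def by auto
  define g where "g k = Max (S k)" for k
  define X where "X k = (if S k = {} then x else Y (g k) k)" for k
  define K where "K M = M + (\<Sum>j\<le>M. N j)" for M
  have KM: "M \<in> S k" if KMk: "K M \<le> k" for M k
  proof -
    have "M \<le> k" using KMk by (simp add: K_def)
    moreover have "N j \<le> k" if jM: "j \<le> M" for j
    proof -
      have "N j \<le> (\<Sum>j\<le>M. N j)" using jM by (intro member_le_sum) auto
      then show ?thesis using KMk by (simp add: K_def)
    qed
    ultimately show ?thesis by (simp add: S_def)
  qed
  have good: "M \<le> g k \<and> dist (X k) x < 1 / real (Suc (g k)) \<and> f k (X k) \<le> ereal (c + 1 / real (Suc (g k)))"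
    if KMk: "K M \<le> k" for M k
  proof -
    have M: "M \<in> S k" by (rule KM[OF KMk])
    then have ne: "S k \<noteq> {}" by auto
    have gS: "g k \<in> S k" unfolding g_def using finS ne by (rule Max_in)
    have "M \<le> g k" unfolding g_def using finS M by (rule Max_ge)
    moreover have "P (g k) k" using gS by (intro N) (simp add: S_def)
    ultimately show ?thesis using Y[of "g k" k] ne by (simp add: X_def)
  qed
  have inv: "1 / real (Suc m) \<le> 1 / real (Suc M)" if "M \<le> m" for m M using that by (simp add: frac_le)
  show ?thesis
  proof (intro exI conjI)
    show "X \<longlonglongrightarrow> x" unfolding lim_sequentially
    proof (intro allI impI)
      fix e :: real assume e: "0 < e"
      obtain M :: nat where M: "1 / e < real M" using reals_Archimedean2 by blast
      have M': "1 / real (Suc M) < e" using M e by (simp add: field_simps)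
      show "\<exists>N. \<forall>n\<ge>N. dist (X n) x < e"
      proof (intro exI allI impI)
        fix n assume "K M \<le> n"
        from good[OF this] show "dist (X n) x < e" using inv[of M "g n"] M' by linarith
      qed
    qed
    show "limsup (\<lambda>k. f k (X k)) \<le> ereal c"
    proof (rule ereal_le_epsilon2)
      fix e :: real assume e: "0 < e"
      obtain M :: nat where M: "1 / e < real M" using reals_Archimedean2 by blast
      have M': "1 / real (Suc M) < e" using M e by (simp add: field_simps)
      have "eventually (\<lambda>k. f k (X k) \<le> ereal c + ereal e) sequentially"
        unfolding eventually_sequentially
      proof (intro exI allI impI)
        fix k assume "K M \<le> k"
        from good[OF this] have 1: "f k (X k) \<le> ereal (c + 1 / real (Suc (g k)))" and 2: "M \<le> g k" by auto
        have "c + 1 / real (Suc (g k)) \<le> c + e" using inv[OF 2] M' by linarith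
        then have "ereal (c + 1 / real (Suc (g k))) \<le> ereal c + ereal e" by simp
        then show "f k (X k) \<le> ereal c + ereal e" using 1 by (rule order_trans[rotated])
      qed
      then show "limsup (\<lambda>k. f k (X k)) \<le> ereal c + ereal e" by (rule Limsup_bounded)
    qed
  qed
qed

lemma limsup_part:
  fixes uk :: "nat \<Rightarrow> 'a::euclidean_space \<Rightarrow> ereal"
  assumes uk: "\<And>k. uk k \<in> Conv_coe" and u: "u \<in> Conv_coe"
    and z: "\<zeta> \<in> M_class DIM('a) p" and p: "1 \<le> p"
    and I: "(\<lambda>k. integral\<^sup>L lebesgue (\<lambda>x. \<bar>zeta_ext \<zeta> (uk k x) - zeta_ext \<zeta> (u x)\<bar> powr p)) \<longlonglongrightarrow> 0"
  shows "\<exists>X. X \<longlonglongrightarrow> x \<and> limsup (\<lambda>k. uk k (X k)) \<le> u x"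
proof (cases "u x = \<infinity>")
  case True then show ?thesis by (intro exI[of _ "\<lambda>k. x"]) simp
next
  case False
  then obtain v where v: "u x = ereal v" using Conv_coeD(1)[OF u, of x] by (cases "u x") auto
  have "eventually (\<lambda>k. \<exists>y. dist y x < 1 / real (Suc m) \<and> uk k y \<le> ereal (v + 1 / real (Suc m))) sequentially" for m
  proof -
    have "eventually (\<lambda>k. \<exists>y\<in>ball x (1 / real (Suc m)). uk k y \<le> ereal (v + 1 / real (Suc m))) sequentially"
      by (rule limsup_claim[OF uk u z p I v]) simp
    then show ?thesis by eventually_elim (auto simp: dist_commute)
  qed
  from diag[OF this] show ?thesis using v by simp
qed

lemma interior_nonempty:
  fixes u :: "'a::euclidean_space \<Rightarrow> ereal"
  assumes u: "u \<in> Conv_coe"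
  shows "\<exists>x0. x0 \<in> interior (dom_fun u)"
proof -
  have cd: "convex (dom_fun u)" by (rule dom_convex[OF Conv_coeD(5)[OF u] Conv_coeD(1)[OF u]])
  obtain x where "u x < \<infinity>" using Conv_coeD(2)[OF u] by blast
  then have xd: "x \<in> dom_fun u" by (simp add: dom_fun_def)
  have "interior (dom_fun u) = rel_interior (dom_fun u)"
    using Conv_coeD(6)[OF u] by (simp add: interior_rel_interior_gen)
  also have "\<dots> \<noteq> {}" using rel_interior_eq_empty[OF cd] xd by auto
  finally show ?thesis by auto
qed

lemma liminf_part:
  fixes uk :: "nat \<Rightarrow> 'a::euclidean_space \<Rightarrow> ereal"
  assumes uk: "\<And>k. uk k \<in> Conv_coe" and u: "u \<in> Conv_coe"
    and z: "\<zeta> \<in> M_class DIM('a) p" and p: "1 \<le> p"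
    and I: "(\<lambda>k. integral\<^sup>L lebesgue (\<lambda>x. \<bar>zeta_ext \<zeta> (uk k x) - zeta_ext \<zeta> (u x)\<bar> powr p)) \<longlonglongrightarrow> 0"
    and X: "X \<longlonglongrightarrow> x"
  shows "u x \<le> liminf (\<lambda>k. uk k (X k))"
proof (rule ccontr)
  assume "\<not> ?thesis"
  then have lt: "liminf (\<lambda>k. uk k (X k)) < u x" by simp
  obtain c where c: "liminf (\<lambda>k. uk k (X k)) < ereal c" "ereal c < u x" using ereal_dense2[OF lt] by blast
  obtain c3 where c3: "ereal c < ereal c3" "ereal c3 < u x" using ereal_dense2[OF c(2)] by blast
  have cc3: "c < c3" using c3(1) by simp
  define c2 where "c2 = (c + c3) / 2"
  have c2: "c < c2" "c2 < c3" using cc3 by (auto simp: c2_def)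
  have fr: "frequently (\<lambda>k. uk k (X k) < ereal c) sequentially"
  proof -
    have "\<not> eventually (\<lambda>k. ereal c \<le> uk k (X k)) sequentially"
    proof
      assume "eventually (\<lambda>k. ereal c \<le> uk k (X k)) sequentially"
      then have "ereal c \<le> liminf (\<lambda>k. uk k (X k))" by (rule Liminf_bounded)
      then show False using c(1) by simp
    qed
    then show ?thesis by (simp add: not_eventually not_le)
  qed
  have "x \<in> {y. ereal c3 < u y}" using c3(2) by simp
  then obtain r where r: "r > 0" "ball x r \<subseteq> {y. ereal c3 < u y}"
    using lsc_open_superlevel[OF Conv_coeD(3)[OF u], of "ereal c3"] open_contains_ball_eq by blast
  obtain x0 where x0: "x0 \<in> interior (dom_fun u)" using interior_nonempty[OF u] by blast
  have "x0 \<in> dom_fun u" using x0 interior_subset by auto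
  then obtain w0 where w0: "u x0 = ereal w0" using Conv_coeD(1)[OF u, of x0] unfolding dom_fun_def by (cases "u x0") auto
  obtain \<rho>0 where \<rho>0: "\<rho>0 > 0" "\<And>y. y \<in> ball x0 \<rho>0 \<Longrightarrow> u y < ereal (w0 + 1)"
    using upper_near_interior[OF Conv_coeD(5)[OF u] Conv_coeD(1)[OF u] x0, of 1] w0 by auto
  define C0 where "C0 = max (w0 + 1) c + 1"
  have C0: "w0 + 1 < C0" "c < C0" by (auto simp: C0_def)
  define D where "D = norm (x0 - x) + \<rho>0"
  have D0: "0 < D" using \<rho>0 by (simp add: D_def add_nonneg_pos)
  define t where "t = min (1/2) (min ((c2 - c) / (C0 + 1 - c)) (r / (2 * D)))"
  have t0: "0 < t" "t < 1" using c2 C0 r D0 by (auto simp: t_def)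
  have tc: "t * (C0 + 1 - c) \<le> c2 - c"
  proof -
    have "t \<le> (c2 - c) / (C0 + 1 - c)" by (simp add: t_def)
    then show ?thesis using C0 by (simp add: pos_le_divide_eq)
  qed
  have tD: "t * D \<le> r / 2"
  proof -
    have "t \<le> r / (2 * D)" by (simp add: t_def)
    then show ?thesis using D0 by (simp add: pos_le_divide_eq field_simps)
  qed
  define \<eta>0 where "\<eta>0 = \<zeta> C0 - \<zeta> (C0 + 1)"
  define \<eta>1 where "\<eta>1 = \<zeta> c2 - \<zeta> c3"
  have \<eta>0: "0 < \<eta>0" unfolding \<eta>0_def using M_classD(2)[OF z, of C0 "C0 + 1"] by simp
  have \<eta>1: "0 < \<eta>1" unfolding \<eta>1_def using M_classD(2)[OF z, of c2 c3] c2 by simp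
  define mb where "mb = measure lebesgue (ball x0 \<rho>0)"
  have mb0: "0 < mb" using ball_meas(3)[OF \<rho>0(1)] by (simp add: mb_def)
  define n where "n = DIM('a)"
  define \<alpha>0 where "\<alpha>0 = \<eta>0 powr p"
  define \<alpha>1 where "\<alpha>1 = \<eta>1 powr p * t ^ n"
  have \<alpha>0: "0 < \<alpha>0" using \<eta>0 by (simp add: \<alpha>0_def)
  have \<alpha>1: "0 < \<alpha>1" using \<eta>1 t0 by (simp add: \<alpha>1_def)
  define Ik where "Ik k = integral\<^sup>L lebesgue (\<lambda>x. \<bar>zeta_ext \<zeta> (uk k x) - zeta_ext \<zeta> (u x)\<bar> powr p)" for k
  have ev1: "eventually (\<lambda>k. Ik k < \<alpha>0 * mb / 2) sequentially"
    using order_tendstoD(2)[OF I, of "\<alpha>0 * mb / 2"] \<alpha>0 mb0 unfolding Ik_def by simp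
  have ev2: "eventually (\<lambda>k. Ik k < \<alpha>1 * mb / 2) sequentially"
    using order_tendstoD(2)[OF I, of "\<alpha>1 * mb / 2"] \<alpha>1 mb0 unfolding Ik_def by simp
  have ev3: "eventually (\<lambda>k. dist (X k) x < r / 2) sequentially"
    using X r(1) by (intro tendstoD) auto
  have ev: "eventually (\<lambda>k. Ik k < \<alpha>0 * mb / 2 \<and> Ik k < \<alpha>1 * mb / 2 \<and> dist (X k) x < r / 2) sequentially"
    using ev1 ev2 ev3 by eventually_elim blast
  obtain k where k: "uk k (X k) < ereal c" "Ik k < \<alpha>0 * mb / 2" "Ik k < \<alpha>1 * mb / 2" "dist (X k) x < r / 2"
    using frequently_ex[OF frequently_eventually_frequently[OF fr ev]] by blast
  have intk: "integrable lebesgue (\<lambda>x. \<bar>zeta_ext \<zeta> (uk k x) - zeta_ext \<zeta> (u x)\<bar> powr p)"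
    using integrable_pair[OF z _ uk u] p by simp
  define G where "G = ball x0 \<rho>0 \<inter> {b. uk k b \<le> ereal (C0 + 1)}"
  define A where "A = ball x0 \<rho>0 - G"
  have Gb: "G \<in> sets borel" unfolding G_def
    using lsc_closed_sublevel[OF Conv_coeD(3)[OF uk], of k "ereal (C0 + 1)"] by auto
  have Ab: "A \<in> sets borel" unfolding A_def using Gb by auto
  have Gs: "G \<in> sets lebesgue" using Gb by simp
  have As: "A \<in> sets lebesgue" using Ab by simp
  have Gsub: "G \<subseteq> ball x0 \<rho>0" by (auto simp: G_def)
  have Asub: "A \<subseteq> ball x0 \<rho>0" by (auto simp: A_def)
  have Gfin: "emeasure lebesgue G < \<infinity>"
    using emeasure_mono[OF Gsub, of lebesgue] ball_meas(2)[of x0 \<rho>0] by auto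
  have Afin: "emeasure lebesgue A < \<infinity>"
    using emeasure_mono[OF Asub, of lebesgue] ball_meas(2)[of x0 \<rho>0] by auto
  have mA: "measure lebesgue A = mb - measure lebesgue G"
    unfolding A_def mb_def using Gs Gsub ball_meas(2)[of x0 \<rho>0] by (intro measure_Diff) auto
  have lowA: "\<alpha>0 * measure lebesgue A \<le> Ik k"
    unfolding \<alpha>0_def Ik_def
  proof (rule int_lower[OF intk _ As Afin])
    fix y assume y: "y \<in> A"
    then have yb: "y \<in> ball x0 \<rho>0" and yg: "ereal (C0 + 1) < uk k y" by (auto simp: A_def G_def not_le)
    have "u y < ereal (w0 + 1)" by (rule \<rho>0(2)[OF yb])
    moreover have "ereal (w0 + 1) \<le> ereal C0" using C0 by simp
    ultimately have "u y \<le> ereal C0" by (meson less_imp_le order_trans)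
    then have "\<zeta> C0 \<le> zeta_ext \<zeta> (u y)" by (rule ze_ge[OF z Conv_coeD(1)[OF u]])
    moreover have "zeta_ext \<zeta> (uk k y) \<le> \<zeta> (C0 + 1)" using yg by (intro ze_le[OF z]) simp
    ultimately have "\<eta>0 \<le> \<bar>zeta_ext \<zeta> (uk k y) - zeta_ext \<zeta> (u y)\<bar>" unfolding \<eta>0_def by linarith
    then show "\<eta>0 powr p \<le> \<bar>zeta_ext \<zeta> (uk k y) - zeta_ext \<zeta> (u y)\<bar> powr p"
      using \<eta>0 p by (intro powr_mono2) auto
  qed (use \<eta>0 in auto)
  define \<phi> where "\<phi> z = (1 / t) *\<^sub>R (z - (1 - t) *\<^sub>R X k)" for z :: 'a
  define H where "H = (\<lambda>b. t *\<^sub>R b + (1 - t) *\<^sub>R X k) ` G"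
  have H_eq: "H = \<phi> -` G"
  proof (intro set_eqI iffI)
    fix z assume "z \<in> H"
    then obtain b where b: "b \<in> G" "z = t *\<^sub>R b + (1 - t) *\<^sub>R X k" by (auto simp: H_def)
    have "\<phi> z = b" using t0 by (simp add: \<phi>_def b(2))
    then show "z \<in> \<phi> -` G" using b(1) by simp
  next
    fix z assume "z \<in> \<phi> -` G"
    then have "\<phi> z \<in> G" by simp
    moreover have "z = t *\<^sub>R \<phi> z + (1 - t) *\<^sub>R X k" using t0 by (simp add: \<phi>_def)
    ultimately show "z \<in> H" unfolding H_def by blast
  qed
  have \<phi>m: "\<phi> \<in> borel_measurable borel" unfolding \<phi>_def
    by (intro borel_measurable_continuous_onI continuous_intros)
  have Hb: "H \<in> sets borel" unfolding H_eq using measurable_sets[OF \<phi>m Gb] by simp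
  have Hs: "H \<in> sets lebesgue" using Hb by simp
  have Hfin: "emeasure lebesgue H < \<infinity>"
    unfolding H_def using emeasure_lebesgue_affine[of t "(1 - t) *\<^sub>R X k" G] Gfin
    by (simp add: ennreal_mult_less_top)
  have mH: "measure lebesgue H = t ^ n * measure lebesgue G"
    unfolding H_def n_def using measure_lebesgue_affine[of t "(1 - t) *\<^sub>R X k" G] t0 by simp
  have lowH: "\<eta>1 powr p * measure lebesgue H \<le> Ik k"
    unfolding Ik_def
  proof (rule int_lower[OF intk _ Hs Hfin])
    fix zz assume "zz \<in> H"
    then obtain b where b: "b \<in> G" "zz = t *\<^sub>R b + (1 - t) *\<^sub>R X k" by (auto simp: H_def)
    have bb: "b \<in> ball x0 \<rho>0" "uk k b \<le> ereal (C0 + 1)" using b(1) by (auto simp: G_def)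
    have "uk k (X k) \<le> ereal c" using k(1) by (rule less_imp_le)
    then obtain a1 where a1: "uk k (X k) = ereal a1" "a1 \<le> c"
      by (rule fin_of_le[OF Conv_coeD(1)[OF uk]])
    obtain a2 where a2: "uk k b = ereal a2" "a2 \<le> C0 + 1"
      by (rule fin_of_le[OF Conv_coeD(1)[OF uk] bb(2)])
    have zz: "zz = (1 - t) *\<^sub>R X k + t *\<^sub>R b" using b(2) by (simp add: algebra_simps)
    have "uk k zz \<le> ereal ((1 - t) * a1 + t * a2)"
      unfolding zz by (rule conv_comb[OF Conv_coeD(5)[OF uk] a1(1) a2(1)]) (use t0 in auto)
    also have "(1 - t) * a1 + t * a2 \<le> (1 - t) * c + t * (C0 + 1)"
      using a1(2) a2(2) t0 by (intro add_mono mult_left_mono) auto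
    also have "(1 - t) * c + t * (C0 + 1) = c + t * (C0 + 1 - c)" by (simp add: algebra_simps)
    also have "\<dots> \<le> c2" using tc by simp
    finally have ukz: "uk k zz \<le> ereal c2" by simp
    have "zz - x = (1 - t) *\<^sub>R (X k - x) + t *\<^sub>R (b - x)" using zz by (simp add: algebra_simps)
    then have "norm (zz - x) \<le> (1 - t) * norm (X k - x) + t * norm (b - x)"
      using t0 norm_triangle_ineq[of "(1 - t) *\<^sub>R (X k - x)" "t *\<^sub>R (b - x)"] by simp
    also have "\<dots> \<le> norm (X k - x) + t * D"
    proof -
      have "(1 - t) * norm (X k - x) \<le> norm (X k - x)" using t0 norm_ge_zero[of "X k - x"] by (intro mult_left_le_one_le) auto
      moreover have "norm (b - x) \<le> D"
        using bb(1) norm_triangle_ineq[of "b - x0" "x0 - x"] by (simp add: D_def dist_norm norm_minus_commute)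
      then have "t * norm (b - x) \<le> t * D" using t0 by (intro mult_left_mono) auto
      ultimately show ?thesis by linarith
    qed
    also have "\<dots> < r" using k(4) tD by (simp add: dist_norm)
    finally have "zz \<in> ball x r" by (simp add: dist_norm norm_minus_commute)
    then have uz: "ereal c3 < u zz" using r(2) by auto
    have "\<zeta> c2 \<le> zeta_ext \<zeta> (uk k zz)" by (rule ze_ge[OF z Conv_coeD(1)[OF uk] ukz])
    moreover have "zeta_ext \<zeta> (u zz) \<le> \<zeta> c3" using uz by (intro ze_le[OF z]) simp
    ultimately have "\<eta>1 \<le> \<bar>zeta_ext \<zeta> (uk k zz) - zeta_ext \<zeta> (u zz)\<bar>" unfolding \<eta>1_def by linarith
    then show "\<eta>1 powr p \<le> \<bar>zeta_ext \<zeta> (uk k zz) - zeta_ext \<zeta> (u zz)\<bar> powr p"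
      using \<eta>1 p by (intro powr_mono2) auto
  qed (use \<eta>1 in auto)
  have lowG: "\<alpha>1 * measure lebesgue G \<le> Ik k" using lowH mH by (simp add: \<alpha>1_def mult_ac)
  have "\<alpha>0 * (mb - measure lebesgue G) < \<alpha>0 * (mb / 2)" using lowA mA k(2) by simp
  then have 1: "mb - measure lebesgue G < mb / 2" using \<alpha>0 by simp
  have "\<alpha>1 * measure lebesgue G < \<alpha>1 * (mb / 2)" using lowG k(3) by simp
  then have 2: "measure lebesgue G < mb / 2" using \<alpha>1 by simp
  show False using 1 2 by linarith
qed

lemma conv_equiv:
  fixes uk :: "nat \<Rightarrow> 'a::euclidean_space \<Rightarrow> ereal"
  assumes p: "1 \<le> p" and z: "\<zeta> \<in> M_class DIM('a) p"
    and uk: "\<And>k. uk k \<in> Conv_coe" and u: "u \<in> Conv_coe"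
  shows "((\<lambda>k. delta_zp \<zeta> p (uk k) u) \<longlonglongrightarrow> 0) \<longleftrightarrow> epi_converges uk u"
proof
  assume d: "(\<lambda>k. delta_zp \<zeta> p (uk k) u) \<longlonglongrightarrow> 0"
  have I: "(\<lambda>k. integral\<^sup>L lebesgue (\<lambda>x. \<bar>zeta_ext \<zeta> (uk k x) - zeta_ext \<zeta> (u x)\<bar> powr p)) \<longlonglongrightarrow> 0"
    by (rule I_tendsto[OF d p])
  show "epi_converges uk u"
    unfolding epi_converges_def
  proof (rule allI, rule conjI)
    fix x
    show "\<forall>X. X \<longlonglongrightarrow> x \<longrightarrow> u x \<le> liminf (\<lambda>k. uk k (X k))"
      using liminf_part[OF uk u z p I] by blast
    show "\<exists>X. X \<longlonglongrightarrow> x \<and> limsup (\<lambda>k. uk k (X k)) \<le> u x"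
      by (rule limsup_part[OF uk u z p I])
  qed
next
  assume "epi_converges uk u"
  then show "(\<lambda>k. delta_zp \<zeta> p (uk k) u) \<longlonglongrightarrow> 0" by (rule forward_dir[OF uk u _ z p])
qed

lemma delta_zero_eq:
  fixes u v :: "'a::euclidean_space \<Rightarrow> ereal"
  assumes p: "1 \<le> p" and z: "\<zeta> \<in> M_class DIM('a) p"
    and u: "u \<in> Conv_coe" and v: "v \<in> Conv_coe" and d: "delta_zp \<zeta> p u v = 0"
  shows "u = v"
proof
  fix x
  have "(\<lambda>k. delta_zp \<zeta> p ((\<lambda>k. u) k) v) \<longlonglongrightarrow> 0" using d by simp
  then have epi: "epi_converges (\<lambda>k. u) v" using conv_equiv[OF p z _ v, of "\<lambda>k. u"] u by blast
  have "v x \<le> liminf (\<lambda>k. u ((\<lambda>k. x) k))" using epi unfolding epi_converges_def by blast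
  then have 1: "v x \<le> u x" by (simp add: Liminf_const)
  obtain X where X: "X \<longlonglongrightarrow> x" "limsup (\<lambda>k. u (X k)) \<le> v x"
    using epi unfolding epi_converges_def by blast
  have "u x \<le> liminf (\<lambda>k. u (X k))" using Conv_coeD(3)[OF u] X(1) unfolding lsc_fun_def by blast
  also have "\<dots> \<le> limsup (\<lambda>k. u (X k))" by (rule Liminf_le_Limsup) simp
  also have "\<dots> \<le> v x" by (rule X(2))
  finally show "u x = v x" using 1 by simp
qed

theorem theorem1p1:
  fixes p :: real and \<zeta> :: "real \<Rightarrow> real"
  assumes p: "1 \<le> p"
    and zeta: "\<zeta> \<in> M_class DIM('a::euclidean_space) p"
  shows "(\<forall>u\<in>(Conv_coe :: ('a \<Rightarrow> ereal) set). \<forall>v\<in>Conv_coe.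
            integrable lebesgue (\<lambda>x. \<bar>zeta_ext \<zeta> (u x) - zeta_ext \<zeta> (v x)\<bar> powr p)
          \<and> 0 \<le> delta_zp \<zeta> p u v
          \<and> (delta_zp \<zeta> p u v = 0 \<longleftrightarrow> u = v)
          \<and> delta_zp \<zeta> p u v = delta_zp \<zeta> p v u
          \<and> (\<forall>w\<in>Conv_coe. delta_zp \<zeta> p u w \<le> delta_zp \<zeta> p u v + delta_zp \<zeta> p v w))
       \<and> (\<forall>uk u. (\<forall>k. uk k \<in> (Conv_coe :: ('a \<Rightarrow> ereal) set)) \<longrightarrow> u \<in> Conv_coe \<longrightarrow>
            (((\<lambda>k. delta_zp \<zeta> p (uk k) u) \<longlonglongrightarrow> 0) \<longleftrightarrow> epi_converges uk u))"
proof (intro conjI ballI allI impI)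
  fix u v :: "'a \<Rightarrow> ereal" assume u: "u \<in> Conv_coe" and v: "v \<in> Conv_coe"
  show "integrable lebesgue (\<lambda>x. \<bar>zeta_ext \<zeta> (u x) - zeta_ext \<zeta> (v x)\<bar> powr p)"
    using integrable_pair[OF zeta _ u v] p by simp
  show "0 \<le> delta_zp \<zeta> p u v" by (rule delta_nonneg)
  show "(delta_zp \<zeta> p u v = 0) = (u = v)"
    using delta_zero_eq[OF p zeta u v] delta_self[of \<zeta> p u] by blast
  show "delta_zp \<zeta> p u v = delta_zp \<zeta> p v u" by (rule delta_sym)
  fix w :: "'a \<Rightarrow> ereal" assume w: "w \<in> Conv_coe"
  show "delta_zp \<zeta> p u w \<le> delta_zp \<zeta> p u v + delta_zp \<zeta> p v w"
    by (rule delta_triangle[OF zeta p u v w])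
next
  fix uk :: "nat \<Rightarrow> 'a \<Rightarrow> ereal" and u :: "'a \<Rightarrow> ereal"
  assume "\<forall>k. uk k \<in> Conv_coe" and u: "u \<in> Conv_coe"
  then show "((\<lambda>k. delta_zp \<zeta> p (uk k) u) \<longlonglongrightarrow> 0) = epi_converges uk u"
    using conv_equiv[OF p zeta _ u, of uk] by blast
qed

end
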